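(* Let $G_1,G_2$ be finite connected biregular bipartite graphs, each with an ordered bipartition (left part, right part). Then $\lambda_2(G_1\circledast G_2)=\max\{\lambda_2(G_1),\lambda_2(G_2)\}$.
   Context: A bipartite graph with ordered parts $(L,R)$ is biregular if all vertices of $L$ have a common degree and all vertices of $R$ have a common degree. For 2-partite graphs $G_1=((V_1^1,V_1^2),E_1)$ and $G_2=((V_2^1,V_2^2),E_2)$, the partite product $G_1\circledast G_2$ has ordered parts $(V_1^1\times V_2^1,\ V_1^2\times V_2^2)$, and $(a,b)\in V_1^1\times V_2^1$ is adjacent to $(c,d)\in V_1^2\times V_2^2$ iff $\{a,c\}\in E_1$ and $\{b,d\}\in E_2$. For a graph $G$, $T_G(v,u)=1/\deg(v)$ if $\{u,v\}$ is an edge and $0$ otherwise (transition matrix for the uniform distribution on edges), and $\lambda_2(G)$ is the second largest eigenvalue of $T_G$, counted with multiplicity. *)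

theory Defs
  imports "HOL-Computational_Algebra.Polynomial" "HOL-Combinatorics.Permutations"
          "HOL-Library.Multiset"
begin

record ('a, 'b) bigraph =
  lpart :: "'a set"
  rpart :: "'b set"
  edge  :: "'a \<Rightarrow> 'b \<Rightarrow> bool"

definition verts :: "('a, 'b) bigraph \<Rightarrow> ('a + 'b) set" where
  "verts G = lpart G <+> rpart G"

fun adj :: "('a, 'b) bigraph \<Rightarrow> 'a + 'b \<Rightarrow> 'a + 'b \<Rightarrow> bool" where
  "adj G (Inl a) (Inr b) = edge G a b"
| "adj G (Inr b) (Inl a) = edge G a b"
| "adj G _ _ = False"

definition wf_bigraph :: "('a, 'b) bigraph \<Rightarrow> bool" where
  "wf_bigraph G \<longleftrightarrow> finite (lpart G) \<and> finite (rpart G) \<and>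
     (\<forall>a b. edge G a b \<longrightarrow> a \<in> lpart G \<and> b \<in> rpart G)"

definition degree :: "('a, 'b) bigraph \<Rightarrow> 'a + 'b \<Rightarrow> nat" where
  "degree G v = card {u \<in> verts G. adj G v u}"

definition biregular :: "('a, 'b) bigraph \<Rightarrow> bool" where
  "biregular G \<longleftrightarrow>
     (\<exists>d. \<forall>a \<in> lpart G. degree G (Inl a) = d) \<and>
     (\<exists>d. \<forall>b \<in> rpart G. degree G (Inr b) = d)"

definition connected_bigraph :: "('a, 'b) bigraph \<Rightarrow> bool" where
  "connected_bigraph G \<longleftrightarrow>
     (\<forall>u \<in> verts G. \<forall>v \<in> verts G.
        (\<lambda>x y. x \<in> verts G \<and> y \<in> verts G \<and> adj G x y)\<^sup>*\<^sup>* u v)"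

definition partite_product ::
  "('a, 'b) bigraph \<Rightarrow> ('c, 'd) bigraph \<Rightarrow> ('a \<times> 'c, 'b \<times> 'd) bigraph" where
  "partite_product G1 G2 =
     \<lparr> lpart = lpart G1 \<times> lpart G2, rpart = rpart G1 \<times> rpart G2,
       edge = (\<lambda>(a, b) (c, d). edge G1 a c \<and> edge G2 b d) \<rparr>"

definition transition :: "('a, 'b) bigraph \<Rightarrow> 'a + 'b \<Rightarrow> 'a + 'b \<Rightarrow> real" where
  "transition G v u = (if adj G v u then 1 / real (degree G v) else 0)"

definition det_on :: "'i set \<Rightarrow> ('i \<Rightarrow> 'i \<Rightarrow> 'r::comm_ring_1) \<Rightarrow> 'r" where
  "det_on V A = (\<Sum>p | p permutes V. of_int (sign p) * (\<Prod>i\<in>V. A i (p i)))"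

definition charpoly_on :: "'i set \<Rightarrow> ('i \<Rightarrow> 'i \<Rightarrow> real) \<Rightarrow> real poly" where
  "charpoly_on V M = det_on V (\<lambda>i j. (if i = j then [:0, 1:] else 0) - [:M i j:])"

definition eigenvalues_desc :: "'i set \<Rightarrow> ('i \<Rightarrow> 'i \<Rightarrow> real) \<Rightarrow> real list" where
  "eigenvalues_desc V M = rev (sorted_list_of_multiset (proots (charpoly_on V M)))"

definition lambda2 :: "('a, 'b) bigraph \<Rightarrow> real" where
  "lambda2 G = eigenvalues_desc (verts G) (transition G) ! 1"

end

theory Submission
  imports Defs "Jordan_Normal_Form.Schur_Decomposition"
begin

definition conjperm :: "('a \<Rightarrow> 'b) \<Rightarrow> ('b \<Rightarrow> 'a) \<Rightarrow> 'b set \<Rightarrow> ('a \<Rightarrow> 'a) \<Rightarrow> 'b \<Rightarrow> 'b" where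
  "conjperm g g' B p = (\<lambda>x. if x \<in> B then g (p (g' x)) else x)"

lemma conjperm_props:
  assumes "finite A" "bij_betw g A B" "p permutes A"
  shows "conjperm g (inv_into A g) B p permutes B" "sign (conjperm g (inv_into A g) B p) = sign p"
proof -
  interpret permutes_bij_finite p A B g "inv_into A g" "conjperm g (inv_into A g) B p"
    apply unfold_locales
    using assms by (auto simp: conjperm_def bij_betw_def)
  show "conjperm g (inv_into A g) B p permutes B" using permutes_p' by (simp add: conjperm_def)
  show "sign (conjperm g (inv_into A g) B p) = sign p" using sign_p' by (simp add: conjperm_def)
qed

lemma det_on_reindex:
  assumes fin: "finite A" and bij: "bij_betw g A B"
  shows "det_on A (\<lambda>i j. M (g i) (g j)) = det_on B M"
proof -
  let ?g' = "inv_into A g"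
  have bij': "bij_betw ?g' B A" using bij by (rule bij_betw_inv_into)
  have finB: "finite B" using bij_betw_finite[OF bij] fin by simp
  have gg': "\<And>x. x \<in> B \<Longrightarrow> g (?g' x) = x" by (rule bij_betw_inv_into_right[OF bij])
  have g'g: "\<And>x. x \<in> A \<Longrightarrow> ?g' (g x) = x" by (rule bij_betw_inv_into_left[OF bij])
  have gB: "\<And>x. x \<in> A \<Longrightarrow> g x \<in> B" using bij_betwE[OF bij] by blast
  have g'A: "\<And>x. x \<in> B \<Longrightarrow> ?g' x \<in> A" using bij_betwE[OF bij'] by blast
  let ?F = "conjperm g ?g' B"
  have inv2: "inv_into B ?g' x = g x" if "x \<in> A" for x
    by (rule inv_into_f_eq[OF bij_betw_imp_inj_on[OF bij'] gB[OF that] g'g[OF that]])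
  have bijF: "bij_betw ?F {p. p permutes A} {q. q permutes B}"
  proof (rule bij_betw_byWitness[where f' = "conjperm ?g' g A"])
    show "\<forall>p\<in>{p. p permutes A}. conjperm ?g' g A (?F p) = p"
    proof
      fix p assume p: "p \<in> {p. p permutes A}"
      show "conjperm ?g' g A (?F p) = p"
      proof
        fix x show "conjperm ?g' g A (?F p) x = p x"
          using p gB g'g permutes_in_image[of p A] permutes_not_in[of p A]
          by (cases "x \<in> A") (auto simp: conjperm_def)
      qed
    qed
    show "\<forall>q\<in>{q. q permutes B}. ?F (conjperm ?g' g A q) = q"
    proof
      fix p assume p: "p \<in> {p. p permutes B}"
      show "?F (conjperm ?g' g A p) = p"
      proof
        fix x show "?F (conjperm ?g' g A p) x = p x"
          using p g'A gg' permutes_in_image[of p B] permutes_not_in[of p B]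
          by (cases "x \<in> B") (auto simp: conjperm_def)
      qed
    qed
    show "?F ` {p. p permutes A} \<subseteq> {q. q permutes B}"
      using conjperm_props(1)[OF fin bij] by auto
    show "conjperm ?g' g A ` {q. q permutes B} \<subseteq> {p. p permutes A}"
    proof
      fix y assume "y \<in> conjperm ?g' g A ` {q. q permutes B}"
      then obtain q where q: "q permutes B" "y = conjperm ?g' g A q" by auto
      have "conjperm ?g' (inv_into B ?g') A q permutes A"
        using conjperm_props(1)[OF finB bij' q(1)] .
      moreover have "conjperm ?g' (inv_into B ?g') A q = conjperm ?g' g A q"
        by (intro ext) (simp add: conjperm_def inv2)
      ultimately show "y \<in> {p. p permutes A}" using q by auto
    qed
  qed
  have "det_on B M = (\<Sum>q\<in>?F ` {p. p permutes A}. of_int (sign q) * (\<Prod>i\<in>B. M i (q i)))"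
    unfolding det_on_def using bij_betw_imp_surj_on[OF bijF] by simp
  also have "\<dots> = (\<Sum>p | p permutes A. of_int (sign (?F p)) * (\<Prod>i\<in>B. M i (?F p i)))"
    by (rule sum.reindex[OF bij_betw_imp_inj_on[OF bijF], unfolded comp_def])
  also have "\<dots> = (\<Sum>p | p permutes A. of_int (sign p) * (\<Prod>i\<in>A. M (g i) (g (p i))))"
  proof (rule sum.cong[OF refl])
    fix p assume "p \<in> {p. p permutes A}"
    hence p: "p permutes A" by simp
    have "(\<Prod>i\<in>B. M i (?F p i)) = (\<Prod>i\<in>g ` A. M i (?F p i))"
      using bij by (simp add: bij_betw_def)
    also have "\<dots> = (\<Prod>i\<in>A. M (g i) (?F p (g i)))"
      using bij by (subst prod.reindex) (auto simp: bij_betw_def)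
    also have "\<dots> = (\<Prod>i\<in>A. M (g i) (g (p i)))"
      by (rule prod.cong) (auto simp: conjperm_def gB g'g)
    finally show "of_int (sign (?F p)) * (\<Prod>i\<in>B. M i (?F p i)) = of_int (sign p) * (\<Prod>i\<in>A. M (g i) (g (p i)))"
      using conjperm_props(2)[OF fin bij p] by simp
  qed
  finally show ?thesis unfolding det_on_def by simp
qed

lemma det_on_mat: "det_on {0..<n} M = det (mat n n (\<lambda>(i,j). M i j))"
proof -
  have c: "mat n n (\<lambda>(i,j). M i j) \<in> carrier_mat n n" by (rule mat_carrier)
  have "det (mat n n (\<lambda>(i,j). M i j)) = (\<Sum>p \<in> {p. p permutes {0..<n}}. 
     signof p * (\<Prod>i = 0..<n. mat n n (\<lambda>(i,j). M i j) $$ (i, p i)))"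
    by (rule det_def'[OF c])
  also have "\<dots> = (\<Sum>p \<in> {p. p permutes {0..<n}}. signof p * (\<Prod>i = 0..<n. M i (p i)))"
  proof (rule sum.cong[OF refl])
    fix p assume p: "p \<in> {p. p permutes {0..<n}}"
    have "(\<Prod>i = 0..<n. mat n n (\<lambda>(i,j). M i j) $$ (i, p i)) = (\<Prod>i = 0..<n. M i (p i))"
    proof (rule prod.cong[OF refl])
      fix i assume i: "i \<in> {0..<n}"
      have pp: "p permutes {0..<n}" using p by (simp only: mem_Collect_eq)
      have "p i \<in> {0..<n}" using permutes_in_image[OF pp, of i] i by (simp only:)
      thus "mat n n (\<lambda>(i,j). M i j) $$ (i, p i) = M i (p i)" using i
        by (simp only: index_mat(1) atLeastLessThan_iff case_prod_conv)
    qed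
    thus "signof p * (\<Prod>i = 0..<n. mat n n (\<lambda>(i,j). M i j) $$ (i, p i)) = signof p * (\<Prod>i = 0..<n. M i (p i))"
      by (simp only:)
  qed
  finally have "det (mat n n (\<lambda>(i,j). M i j)) = (\<Sum>p \<in> {p. p permutes {0..<n}}. signof p * (\<Prod>i = 0..<n. M i (p i)))" .
  thus ?thesis unfolding det_on_def by (rule sym)
qed

lemma charpoly_on_char_poly:
  assumes bij: "bij_betw g {0..<n} V"
  shows "charpoly_on V M = char_poly (mat n n (\<lambda>(i,j). M (g i) (g j)))"
proof -
  have "charpoly_on V M = det_on {0..<n} (\<lambda>i j. (if g i = g j then [:0, 1:] else 0) - [:M (g i) (g j):])"
    unfolding charpoly_on_def by (rule det_on_reindex[symmetric, OF _ bij]) (rule finite_atLeastLessThan)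
  also have "\<dots> = det_on {0..<n} (\<lambda>i j. (if i = j then [:0, 1:] else 0) - [:M (g i) (g j):])"
    unfolding det_on_def
  proof (rule sum.cong[OF refl])
    fix p assume p: "p \<in> {p. p permutes {0..<n}}"
    have pp: "p permutes {0..<n}" using p by (simp only: mem_Collect_eq)
    have "(\<Prod>i\<in>{0..<n}. (if g i = g (p i) then [:0, 1:] else 0) - [:M (g i) (g (p i)):]) = 
          (\<Prod>i\<in>{0..<n}. (if i = p i then [:0, 1:] else 0) - [:M (g i) (g (p i)):])"
    proof (rule prod.cong[OF refl])
      fix i assume i: "i \<in> {0..<n}"
      have pi: "p i \<in> {0..<n}" using permutes_in_image[OF pp, of i] i by (simp only:)
      have inj: "inj_on g {0..<n}" using bij_betw_imp_inj_on[OF bij] .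
      have "g i = g (p i) \<longleftrightarrow> i = p i" using inj_onD[OF inj _ i pi] by auto
      thus "(if g i = g (p i) then [:0, 1:] else 0) - [:M (g i) (g (p i)):] =
            (if i = p i then [:0, 1:] else 0) - [:M (g i) (g (p i)):]" by (simp only:)
    qed
    thus "of_int (sign p) * (\<Prod>i\<in>{0..<n}. (if g i = g (p i) then [:0, 1:] else 0) - [:M (g i) (g (p i)):]) = 
          of_int (sign p) * (\<Prod>i\<in>{0..<n}. (if i = p i then [:0, 1:] else 0) - [:M (g i) (g (p i)):])"
      by (simp only:)
  qed
  also have "\<dots> = det (mat n n (\<lambda>(i,j). (if i = j then [:0, 1:] else 0) - [:M (g i) (g j):]))"
    by (rule det_on_mat)
  also have "mat n n (\<lambda>(i,j). (if i = j then [:0, 1:] else 0) - [:M (g i) (g j):])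
     = char_poly_matrix (mat n n (\<lambda>(i,j). M (g i) (g j)))"
  proof (rule eq_matI)
    fix i j assume "i < dim_row (char_poly_matrix (mat n n (\<lambda>(i,j). M (g i) (g j))))"
      "j < dim_col (char_poly_matrix (mat n n (\<lambda>(i,j). M (g i) (g j))))"
    hence ij: "i < n" "j < n" unfolding char_poly_matrix_def by simp_all
    show "mat n n (\<lambda>(i,j). (if i = j then [:0, 1:] else 0) - [:M (g i) (g j):]) $$ (i, j) =
      char_poly_matrix (mat n n (\<lambda>(i,j). M (g i) (g j))) $$ (i, j)"
      unfolding char_poly_matrix_def using ij by simp
  qed (simp_all add: char_poly_matrix_def)
  finally show ?thesis unfolding char_poly_def .
qed

definition kron :: "'a::times mat \<Rightarrow> 'a mat \<Rightarrow> 'a mat" where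
  "kron A B = mat (dim_row A * dim_row B) (dim_col A * dim_col B)
     (\<lambda>(i,j). A $$ (i div dim_row B, j div dim_col B) * B $$ (i mod dim_row B, j mod dim_col B))"

lemma kron_carrier: "A \<in> carrier_mat n n \<Longrightarrow> B \<in> carrier_mat m m \<Longrightarrow> kron A B \<in> carrier_mat (n*m) (n*m)"
  unfolding kron_def carrier_mat_def by simp

lemma kron_index: "A \<in> carrier_mat n n \<Longrightarrow> B \<in> carrier_mat m m \<Longrightarrow> i < n*m \<Longrightarrow> j < n*m \<Longrightarrow>
  kron A B $$ (i,j) = A $$ (i div m, j div m) * B $$ (i mod m, j mod m)"
  unfolding kron_def carrier_mat_def by simp

lemma sum_divmod: "(\<Sum>k<(n::nat)*m. f k) = (\<Sum>i<n. \<Sum>j<m. f (i*m+j))"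
proof -
  have "(\<Sum>k<n*m. f k) = (\<Sum>i<n. sum f {i*m..<i*m+m})"
    by (rule sum.nat_group[symmetric])
  also have "\<dots> = (\<Sum>i<n. \<Sum>j<m. f (i*m+j))"
  proof (rule sum.cong[OF refl])
    fix i
    show "sum f {i*m..<i*m+m} = (\<Sum>j<m. f (i*m+j))"
      using sum.shift_bounds_nat_ivl[of f 0 "i*m" m] by (simp add: lessThan_atLeast0 add.commute)
  qed
  finally show ?thesis .
qed

lemma prod_divmod: "(\<Prod>k<(n::nat)*m. f k) = (\<Prod>i<n. \<Prod>j<m. f (i*m+j))"
proof -
  have "(\<Prod>k<n*m. f k) = (\<Prod>i<n. prod f {i*m..<i*m+m})"
    by (rule prod.nat_group[symmetric])
  also have "\<dots> = (\<Prod>i<n. \<Prod>j<m. f (i*m+j))"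
  proof (rule prod.cong[OF refl])
    fix i
    show "prod f {i*m..<i*m+m} = (\<Prod>j<m. f (i*m+j))"
      using prod.shift_bounds_nat_ivl[of f 0 "i*m" m] by (simp add: lessThan_atLeast0 add.commute)
  qed
  finally show ?thesis .
qed

lemma divmod_simps: "j < m \<Longrightarrow> (i*m+j) div m = (i::nat)" "j < m \<Longrightarrow> (i*m+j) mod m = (j::nat)"
  by simp_all

lemma kron_mult:
  fixes A :: "'a::comm_ring_1 mat"
  assumes A: "A \<in> carrier_mat n n" and B: "B \<in> carrier_mat m m"
    and C: "C \<in> carrier_mat n n" and D: "D \<in> carrier_mat m m"
  shows "kron A B * kron C D = kron (A * C) (B * D)"
proof (rule eq_matI)
  have AC: "A * C \<in> carrier_mat n n" using A C by simp
  have BD: "B * D \<in> carrier_mat m m" using B D by simp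
  fix i j assume "i < dim_row (kron (A*C) (B*D))" and "j < dim_col (kron (A * C) (B * D))"
  hence i: "i < n*m" and j: "j < n*m" using kron_carrier[OF AC BD] by auto
  have m: "m > 0" using i by (cases m) auto
  have id: "i div m < n" "j div m < n" using i j m by (auto simp: less_mult_imp_div_less)
  have im: "i mod m < m" "j mod m < m" using m by auto
  have "(kron A B * kron C D) $$ (i,j) = (\<Sum>k<n*m. kron A B $$ (i,k) * kron C D $$ (k,j))"
    using kron_carrier[OF A B] kron_carrier[OF C D] i j
    by (simp add: scalar_prod_def atLeast0LessThan)
  also have "\<dots> = (\<Sum>k<n*m. (A$$(i div m, k div m) * B$$(i mod m, k mod m)) * (C$$(k div m, j div m) * D $$(k mod m, j mod m)))"
    by (rule sum.cong[OF refl]) (simp add: kron_index[OF A B] kron_index[OF C D] i j)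
  also have "\<dots> = (\<Sum>k1<n. \<Sum>k2<m. (A$$(i div m, k1) * B$$(i mod m, k2)) * (C$$(k1, j div m) * D $$(k2, j mod m)))"
    by (subst sum_divmod) (simp add: divmod_simps)
  also have "\<dots> = (\<Sum>k1<n. A$$(i div m, k1) * C$$(k1, j div m)) * (\<Sum>k2<m. B$$(i mod m, k2) * D$$(k2, j mod m))"
    by (simp add: sum_product mult_ac)
  also have "\<dots> = (A * C) $$ (i div m, j div m) * (B * D) $$ (i mod m, j mod m)"
    using A B C D id im by (simp add: scalar_prod_def atLeast0LessThan)
  also have "\<dots> = kron (A*C) (B*D) $$ (i,j)"
    by (rule kron_index[OF AC BD i j, symmetric])
  finally show "(kron A B * kron C D) $$ (i,j) = kron (A*C) (B*D) $$ (i,j)" .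
qed (use kron_carrier[OF A B] kron_carrier[OF C D] A B C D in \<open>auto simp: kron_def\<close>)

lemma kron_one: "kron (1\<^sub>m n) (1\<^sub>m m) = (1\<^sub>m (n*m) :: 'a::comm_ring_1 mat)"
proof (rule eq_matI)
  fix i j assume "i < dim_row (1\<^sub>m (n*m) :: 'a mat)" "j < dim_col (1\<^sub>m (n*m) :: 'a mat)"
  hence i: "i < n*m" and j: "j < n*m" by auto
  have m: "m > 0" using i by (cases m) auto
  have id: "i div m < n" "j div m < n" using i j m by (auto simp: less_mult_imp_div_less)
  have im: "i mod m < m" "j mod m < m" using m by auto
  have eq: "(i div m = j div m \<and> i mod m = j mod m) \<longleftrightarrow> i = j"
    by (metis div_mult_mod_eq)
  have "kron (1\<^sub>m n) (1\<^sub>m m) $$ (i, j) = (1\<^sub>m n :: 'a mat) $$ (i div m, j div m) * (1\<^sub>m m :: 'a mat) $$ (i mod m, j mod m)"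
    by (rule kron_index[OF one_carrier_mat one_carrier_mat i j])
  also have "\<dots> = (if i div m = j div m \<and> i mod m = j mod m then 1 else 0)" using id im by simp
  also have "\<dots> = (if i = j then 1 else 0)" by (simp only: eq)
  also have "\<dots> = (1\<^sub>m (n*m) :: 'a mat) $$ (i, j)" using i j by simp
  finally show "kron (1\<^sub>m n) (1\<^sub>m m) $$ (i, j) = (1\<^sub>m (n*m) :: 'a mat) $$ (i, j)" .
qed (auto simp: kron_def)

lemma kron_upper_triangular:
  assumes A: "A \<in> carrier_mat n n" and B: "B \<in> carrier_mat m m"
    and uA: "upper_triangular A" and uB: "upper_triangular B"
  shows "upper_triangular (kron (A::'a::comm_ring_1 mat) B)"
proof (rule upper_triangularI)
  fix i j assume ji: "j < i" and "i < dim_row (kron A B)"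
  hence i: "i < n*m" using kron_carrier[OF A B] by auto
  have j: "j < n*m" using i ji by simp
  have m: "m > 0" using i by (cases m) auto
  have id: "i div m < n" "j div m < n" using i j m by (auto simp: less_mult_imp_div_less)
  have im: "i mod m < m" "j mod m < m" using m by auto
  have le: "j div m \<le> i div m" using ji by (simp add: div_le_mono)
  show "kron A B $$ (i, j) = 0"
  proof (cases "j div m < i div m")
    case True
    hence "A $$ (i div m, j div m) = 0" using upper_triangularD[OF uA True] A id by auto
    thus ?thesis using kron_index[OF A B i j] by simp
  next
    case False
    hence eq: "j div m = i div m" using le by simp
    have "j mod m < i mod m"
    proof (rule ccontr)
      assume "\<not> j mod m < i mod m"
      hence "i mod m \<le> j mod m" by simp
      moreover have "m * (i div m) = m * (j div m)" using eq by simp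
      moreover have "m * (i div m) + i mod m = i" by (rule mult_div_mod_eq)
      moreover have "m * (j div m) + j mod m = j" by (rule mult_div_mod_eq)
      ultimately show False using ji by linarith
    qed
    hence "B $$ (i mod m, j mod m) = 0" using upper_triangularD[OF uB] B im by auto
    thus ?thesis using kron_index[OF A B i j] by simp
  qed
qed

lemma kron_diag:
  assumes A: "A \<in> carrier_mat n n" and B: "B \<in> carrier_mat m m"
  shows "(\<Prod>a\<leftarrow>diag_mat (kron A B). f a) = (\<Prod>i<n. \<Prod>j<m. f (A$$(i,i) * B$$(j,j)))"
proof -
  have "(\<Prod>a\<leftarrow>diag_mat (kron A B). f a) = (\<Prod>k\<leftarrow>[0..<n*m]. f (kron A B $$ (k,k)))"
    using kron_carrier[OF A B] by (simp add: diag_mat_def comp_def)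
  also have "\<dots> = (\<Prod>k<n*m. f (kron A B $$ (k,k)))"
    by (simp add: prod.distinct_set_conv_list[symmetric] atLeast0LessThan)
  also have "\<dots> = (\<Prod>i<n. \<Prod>j<m. f (kron A B $$ (i*m+j,i*m+j)))"
    by (rule prod_divmod)
  also have "\<dots> = (\<Prod>i<n. \<Prod>j<m. f (A$$(i,i) * B$$(j,j)))"
  proof (intro prod.cong refl)
    fix i j assume i: "i \<in> {..<n}" and j: "j \<in> {..<m}"
    have "i*m+j < n*m"
    proof -
      have "i*m+j < i*m + m" using j by simp
      also have "\<dots> = (i+1)*m" by simp
      also have "\<dots> \<le> n*m" using i by (intro mult_right_mono) auto
      finally show ?thesis .
    qed
    thus "f (kron A B $$ (i*m+j,i*m+j)) = f (A$$(i,i) * B$$(j,j))"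
      using kron_index[OF A B] j by simp
  qed
  finally show ?thesis .
qed

lemma kron_char_poly:
  fixes A B :: "'a::conjugatable_ordered_field mat"
  assumes A: "A \<in> carrier_mat n n" and B: "B \<in> carrier_mat m m"
    and cA: "char_poly A = (\<Prod>a\<leftarrow>as. [:-a,1:])" and cB: "char_poly B = (\<Prod>b\<leftarrow>bs. [:-b,1:])"
  shows "char_poly (kron A B) = (\<Prod>i<n. \<Prod>j<m. [:-(as!i * bs!j), 1:])"
proof -
  obtain TA PA QA where sA: "schur_decomposition A as = (TA,PA,QA)" by (cases "schur_decomposition A as") auto
  obtain TB PB QB where sB: "schur_decomposition B bs = (TB,PB,QB)" by (cases "schur_decomposition B bs") auto
  note SA = schur_decomposition[OF A cA sA]
  note SB = schur_decomposition[OF B cB sB]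
  note wA = similar_mat_witD2[OF A conjunct1[OF SA]]
  note wB = similar_mat_witD2[OF B conjunct1[OF SB]]
  have utA: "upper_triangular TA" and dA: "diag_mat TA = as" using SA by auto
  have utB: "upper_triangular TB" and dB: "diag_mat TB = bs" using SB by auto
  have TA: "TA \<in> carrier_mat n n" and PA: "PA \<in> carrier_mat n n" and QA: "QA \<in> carrier_mat n n"
    using wA by auto
  have TB: "TB \<in> carrier_mat m m" and PB: "PB \<in> carrier_mat m m" and QB: "QB \<in> carrier_mat m m"
    using wB by auto
  have "kron A B = kron (PA * TA * QA) (PB * TB * QB)" using wA(3) wB(3) by simp
  also have "\<dots> = kron (PA * TA) (PB * TB) * kron QA QB"
    by (rule kron_mult[symmetric]) (use PA TA QA PB TB QB in auto)
  also have "kron (PA * TA) (PB * TB) = kron PA PB * kron TA TB"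
    by (rule kron_mult[symmetric]) (use PA TA QA PB TB QB in auto)
  finally have eq: "kron A B = kron PA PB * kron TA TB * kron QA QB" .
  have "kron PA PB * kron QA QB = kron (PA * QA) (PB * QB)"
    by (rule kron_mult) (use PA TA QA PB TB QB in auto)
  also have "\<dots> = 1\<^sub>m (n*m)" using wA(1) wB(1) kron_one by simp
  finally have PQ: "kron PA PB * kron QA QB = 1\<^sub>m (n*m)" .
  have "kron QA QB * kron PA PB = kron (QA * PA) (QB * PB)"
    by (rule kron_mult) (use PA TA QA PB TB QB in auto)
  also have "\<dots> = 1\<^sub>m (n*m)" using wA(2) wB(2) kron_one by simp
  finally have QP: "kron QA QB * kron PA PB = 1\<^sub>m (n*m)" .
  have sim: "similar_mat (kron A B) (kron TA TB)"
    by (rule similar_matI[OF _ PQ QP eq]) (use kron_carrier[OF A B] kron_carrier[OF TA TB]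
       kron_carrier[OF PA PB] kron_carrier[OF QA QB] in auto)
  have "char_poly (kron A B) = char_poly (kron TA TB)" by (rule char_poly_similar[OF sim])
  also have "\<dots> = (\<Prod>a\<leftarrow>diag_mat (kron TA TB). [:- a, 1:])"
    by (rule char_poly_upper_triangular[OF kron_carrier[OF TA TB] kron_upper_triangular[OF TA TB utA utB]])
  also have "\<dots> = (\<Prod>i<n. \<Prod>j<m. [:-(TA$$(i,i) * TB$$(j,j)), 1:])"
    by (rule kron_diag[OF TA TB])
  also have "\<dots> = (\<Prod>i<n. \<Prod>j<m. [:-(as!i * bs!j), 1:])"
  proof (intro prod.cong refl)
    fix i j assume i: "i \<in> {..<n}" and j: "j \<in> {..<m}"
    have "as ! i = TA $$ (i,i)" using i TA unfolding dA[symmetric] diag_mat_def by simp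
    moreover have "bs ! j = TB $$ (j,j)" using j TB unfolding dB[symmetric] diag_mat_def by simp
    ultimately show "[:-(TA$$(i,i) * TB$$(j,j)), 1:] = [:-(as!i * bs!j), 1:]" by simp
  qed
  finally show ?thesis .
qed

lemma eigen_real_bounds:
  fixes M :: "real mat" and Bm :: "real mat" and a :: complex
  assumes M: "M \<in> carrier_mat n n" and Bm: "Bm \<in> carrier_mat n r"
    and MB: "\<And>i j. i < n \<Longrightarrow> j < n \<Longrightarrow> M$$(i,j) = (\<Sum>k<r. Bm$$(i,k) * Bm$$(j,k))"
    and nonneg: "\<And>i j. i<n \<Longrightarrow> j<n \<Longrightarrow> M$$(i,j) \<ge> 0"
    and rows: "\<And>i. i<n \<Longrightarrow> (\<Sum>j<n. M$$(i,j)) = 1"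
    and ev: "eigenvalue (map_mat complex_of_real M) a"
  shows "\<exists>\<mu>. a = complex_of_real \<mu> \<and> 0 \<le> \<mu> \<and> \<mu> \<le> 1"
proof -
  let ?MC = "map_mat complex_of_real M"
  obtain v where v: "eigenvector ?MC v a" using ev unfolding eigenvalue_def by blast
  have vc: "v \<in> carrier_vec n" and vnz: "v \<noteq> 0\<^sub>v n" and Mv: "?MC *\<^sub>v v = a \<cdot>\<^sub>v v"
    using v M unfolding eigenvector_def by auto
  have comp: "(\<Sum>j<n. complex_of_real (M$$(i,j)) * (v $ j)) = a * (v $ i)" if i: "i < n" for i
  proof -
    have "(?MC *\<^sub>v v) $ i = a * (v $ i)" using Mv i M vc by simp
    moreover have "(?MC *\<^sub>v v) $ i = (\<Sum>j<n. complex_of_real (M$$(i,j)) * (v $ j))"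
      using i M vc by (simp add: scalar_prod_def atLeast0LessThan)
    ultimately show ?thesis by simp
  qed
  obtain i1 where i1: "i1 < n" "(v $ i1) \<noteq> 0"
    using vnz vc by (metis carrier_vecD eq_vecI index_zero_vec(1) index_zero_vec(2))
  define N where "N = (\<Sum>i<n. (cmod ((v $ i)))^2)"
  have Npos: "N > 0"
  proof -
    have "(cmod ((v $ i1)))^2 > 0" using i1 by simp
    also have "(cmod ((v $ i1)))^2 \<le> N" unfolding N_def
      by (rule member_le_sum) (use i1 in auto)
    finally show ?thesis .
  qed
  define w where "w = (\<lambda>k. \<Sum>j<n. complex_of_real (Bm$$(j,k)) * (v $ j))"
  define W where "W = (\<Sum>k<r. (cmod (w k))^2)"
  have W0: "W \<ge> 0" unfolding W_def by (simp add: sum_nonneg)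
  have "(\<Sum>i<n. cnj ((v $ i)) * (\<Sum>j<n. complex_of_real (M$$(i,j)) * (v $ j))) = (\<Sum>i<n. cnj ((v $ i)) * (a * (v $ i)))"
    by (rule sum.cong[OF refl]) (simp add: comp)
  also have "\<dots> = (\<Sum>i<n. a * complex_of_real ((cmod (v $ i))^2))"
  proof (rule sum.cong[OF refl])
    fix i
    have "cnj (v $ i) * (a * (v $ i)) = a * ((v $ i) * cnj (v $ i))" by (simp only: mult_ac)
    also have "(v $ i) * cnj (v $ i) = complex_of_real ((cmod (v $ i))^2)" by (rule complex_norm_square[symmetric])
    finally show "cnj (v $ i) * (a * (v $ i)) = a * complex_of_real ((cmod (v $ i))^2)" .
  qed
  also have "\<dots> = a * complex_of_real N"
    unfolding N_def by (simp only: sum_distrib_left of_real_sum)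
  finally have lhs: "(\<Sum>i<n. cnj ((v $ i)) * (\<Sum>j<n. complex_of_real (M$$(i,j)) * (v $ j))) = a * complex_of_real N" .
  have "(\<Sum>i<n. cnj ((v $ i)) * (\<Sum>j<n. complex_of_real (M$$(i,j)) * (v $ j)))
     = (\<Sum>i<n. \<Sum>j<n. \<Sum>k<r. cnj ((v $ i)) * complex_of_real (Bm$$(i,k)) * (complex_of_real (Bm$$(j,k)) * (v $ j)))"
    by (intro sum.cong refl) (simp add: MB sum_distrib_left sum_distrib_right mult_ac)
  also have "\<dots> = (\<Sum>i<n. \<Sum>k<r. \<Sum>j<n. cnj ((v $ i)) * complex_of_real (Bm$$(i,k)) * (complex_of_real (Bm$$(j,k)) * (v $ j)))"
    by (rule sum.cong[OF refl]) (rule sum.swap)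
  also have "\<dots> = (\<Sum>k<r. \<Sum>i<n. \<Sum>j<n. cnj ((v $ i)) * complex_of_real (Bm$$(i,k)) * (complex_of_real (Bm$$(j,k)) * (v $ j)))"
    by (rule sum.swap)
  also have "\<dots> = (\<Sum>k<r. (\<Sum>i<n. cnj (v $ i) * complex_of_real (Bm$$(i,k))) * (\<Sum>j<n. complex_of_real (Bm$$(j,k)) * (v $ j)))"
    by (simp only: sum_product)
  also have "\<dots> = (\<Sum>k<r. cnj (w k) * w k)"
  proof (rule sum.cong[OF refl])
    fix k
    have "cnj (w k) = (\<Sum>i<n. cnj (v $ i) * complex_of_real (Bm$$(i,k)))"
      unfolding w_def by (simp add: cnj_sum mult.commute)
    thus "(\<Sum>i<n. cnj (v $ i) * complex_of_real (Bm$$(i,k))) * (\<Sum>j<n. complex_of_real (Bm$$(j,k)) * (v $ j)) = cnj (w k) * w k"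
      unfolding w_def by simp
  qed
  also have "\<dots> = (\<Sum>k<r. complex_of_real ((cmod (w k))^2))"
  proof (rule sum.cong[OF refl])
    fix k
    have "cnj (w k) * w k = w k * cnj (w k)" by (simp only: mult_ac)
    also have "\<dots> = complex_of_real ((cmod (w k))^2)" by (rule complex_norm_square[symmetric])
    finally show "cnj (w k) * w k = complex_of_real ((cmod (w k))^2)" .
  qed
  also have "\<dots> = complex_of_real W"
    unfolding W_def by (simp only: of_real_sum)
  finally have "a * complex_of_real N = complex_of_real W" using lhs by simp
  hence aeq: "a = complex_of_real (W / N)" using Npos
    by (simp add: field_simps)
  define \<mu> where "\<mu> = W / N"
  have mu0: "\<mu> \<ge> 0" unfolding \<mu>_def using W0 Npos by simp
  define mx where "mx = Max ((\<lambda>i. cmod ((v $ i))) ` {..<n})"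
  have nne: "{..<n} \<noteq> {}" using i1 by auto
  have "mx \<in> (\<lambda>i. cmod (v $ i)) ` {..<n}" unfolding mx_def by (rule Max_in) (use nne in auto)
  then obtain i0 where i0': "i0 \<in> {..<n}" "mx = cmod (v $ i0)" by blast
  hence i0: "i0 < n" "cmod (v $ i0) = mx" by auto
  have le_mx: "cmod ((v $ j)) \<le> mx" if "j < n" for j
    unfolding mx_def by (rule Max_ge) (use that in auto)
  have mxpos: "mx > 0"
  proof -
    have "0 < cmod ((v $ i1))" using i1 by simp
    also have "\<dots> \<le> mx" by (rule le_mx[OF i1(1)])
    finally show ?thesis .
  qed
  have amu: "a = complex_of_real \<mu>" using aeq unfolding \<mu>_def by simp
  have "\<mu> * mx = cmod a * cmod (v $ i0)" using i0 mu0 amu by simp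
  also have "\<dots> = cmod (a * (v $ i0))" by (rule norm_mult[symmetric])
  also have "\<dots> = cmod (\<Sum>j<n. complex_of_real (M$$(i0,j)) * (v $ j))" using comp[OF i0(1)] by simp
  also have "\<dots> \<le> (\<Sum>j<n. cmod (complex_of_real (M$$(i0,j)) * (v $ j)))" by (rule norm_sum)
  also have "\<dots> = (\<Sum>j<n. M$$(i0,j) * cmod ((v $ j)))"
    by (rule sum.cong[OF refl]) (simp add: norm_mult nonneg i0(1))
  also have "\<dots> \<le> (\<Sum>j<n. M$$(i0,j) * mx)"
    by (rule sum_mono) (simp add: mult_left_mono nonneg i0(1) le_mx)
  also have "\<dots> = mx" using rows[OF i0(1)] by (simp add: sum_distrib_right[symmetric])
  finally have "\<mu> * mx \<le> mx" .
  hence "\<mu> \<le> 1" using mxpos by simp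
  thus ?thesis using aeq mu0 unfolding \<mu>_def by blast
qed


lemma poly_linear_prod_root:
  fixes as :: "'a::idom list"
  assumes "a \<in> set as"
  shows "poly (\<Prod>b\<leftarrow>as. [:-b,1:]) a = 0"
  using assms by (induction as) auto

lemma gram_split:
  fixes M :: "real mat" and Bm :: "real mat"
  assumes M: "M \<in> carrier_mat n n" and Bm: "Bm \<in> carrier_mat n r"
    and MB: "\<And>i j. i < n \<Longrightarrow> j < n \<Longrightarrow> M$$(i,j) = (\<Sum>k<r. Bm$$(i,k) * Bm$$(j,k))"
    and nonneg: "\<And>i j. i<n \<Longrightarrow> j<n \<Longrightarrow> M$$(i,j) \<ge> 0"
    and rows: "\<And>i. i<n \<Longrightarrow> (\<Sum>j<n. M$$(i,j)) = 1"
    and npos: "n > 0"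
  shows "\<exists>mus. char_poly M = (\<Prod>\<mu>\<leftarrow>mus. [:-\<mu>,1:]) \<and> length mus = n \<and>
            (\<forall>\<mu>\<in>set mus. 0 \<le> \<mu> \<and> \<mu> \<le> 1) \<and> 1 \<in> set mus"
proof -
  interpret rp: map_poly_inj_idom_hom "complex_of_real" ..
  let ?MC = "map_mat complex_of_real M"
  have MC: "?MC \<in> carrier_mat n n" using M by simp
  obtain as where cas: "char_poly ?MC = (\<Prod>a\<leftarrow>as. [:-a,1:])" and len: "length as = n"
    using char_poly_factorized[OF MC] by blast
  have hom: "char_poly ?MC = map_poly complex_of_real (char_poly M)"
    by (rule of_real_hom.char_poly_hom[OF M])
  have real: "\<exists>\<mu>. a = complex_of_real \<mu> \<and> 0 \<le> \<mu> \<and> \<mu> \<le> 1" if a: "a \<in> set as" for a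
  proof -
    have "poly (char_poly ?MC) a = 0" unfolding cas by (rule poly_linear_prod_root[OF a])
    hence "eigenvalue ?MC a" using eigenvalue_root_char_poly[OF MC] by simp
    thus ?thesis using eigen_real_bounds[OF M Bm MB nonneg rows] by blast
  qed
  define mus where "mus = map Re as"
  have asmus: "as = map complex_of_real mus"
    unfolding mus_def map_map
    by (rule sym, rule map_idI) (use real in fastforce)
  have "map_poly complex_of_real (\<Prod>\<mu>\<leftarrow>mus. [:-\<mu>,1:]) = (\<Prod>\<mu>\<leftarrow>mus. map_poly complex_of_real [:-\<mu>,1:])"
    by (simp add: rp.hom_prod_list comp_def)
  also have "\<dots> = (\<Prod>a\<leftarrow>as. [:-a,1:])" unfolding asmus by (simp add: comp_def)
  also have "\<dots> = map_poly complex_of_real (char_poly M)" using cas hom by simp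
  finally have cM: "char_poly M = (\<Prod>\<mu>\<leftarrow>mus. [:-\<mu>,1:])" by (rule rp.injectivity[symmetric])
  have rng: "\<forall>\<mu>\<in>set mus. 0 \<le> \<mu> \<and> \<mu> \<le> 1"
    unfolding mus_def using real by fastforce
  have "eigenvector M (vec n (\<lambda>_. 1::real)) 1"
    unfolding eigenvector_def
  proof (intro conjI)
    show "vec n (\<lambda>_. 1::real) \<in> carrier_vec (dim_row M)" using M by simp
    show "vec n (\<lambda>_. 1::real) \<noteq> 0\<^sub>v (dim_row M)"
    proof
      assume "vec n (\<lambda>_. 1::real) = 0\<^sub>v (dim_row M)"
      hence "vec n (\<lambda>_. 1::real) = 0\<^sub>v n" using M by simp
      hence "vec n (\<lambda>_. 1::real) $ 0 = 0\<^sub>v n $ 0" by (simp only:)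
      thus False using npos by simp
    qed
    show "M *\<^sub>v vec n (\<lambda>_. 1::real) = 1 \<cdot>\<^sub>v vec n (\<lambda>_. 1::real)"
    proof (rule eq_vecI)
      fix i assume "i < dim_vec (1 \<cdot>\<^sub>v vec n (\<lambda>_. 1::real))"
      hence i: "i < n" by simp
      have "(M *\<^sub>v vec n (\<lambda>_. 1::real)) $ i = (\<Sum>j<n. M$$(i,j))"
        using M i by (simp add: scalar_prod_def atLeast0LessThan)
      thus "(M *\<^sub>v vec n (\<lambda>_. 1::real)) $ i = (1 \<cdot>\<^sub>v vec n (\<lambda>_. 1::real)) $ i" using rows[OF i] i by simp
    qed (use M in simp)
  qed
  hence "eigenvalue M 1" unfolding eigenvalue_def by blast
  hence "poly (char_poly M) 1 = 0" using eigenvalue_root_char_poly[OF M] by simp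
  hence "(\<Prod>\<mu>\<leftarrow>mus. poly [:-\<mu>,1:] 1) = 0" unfolding cM poly_prod_list by (simp add: comp_def)
  hence "0 \<in> set (map (\<lambda>\<mu>. poly [:-\<mu>,1:] (1::real)) mus)" by (simp only: prod_list_zero_iff)
  hence "\<exists>\<mu>\<in>set mus. poly [:-\<mu>,1:] (1::real) = 0" by auto
  hence "\<exists>\<mu>\<in>set mus. 1 - \<mu> = (0::real)" by simp
  hence one: "1 \<in> set mus" by auto
  have "length mus = n" unfolding mus_def using len by simp
  thus ?thesis using cM rng one by blast
qed

lemma const_poly_sum: "(\<Sum>k\<in>A. [:f k:]) = [:\<Sum>k\<in>A. f k:]"
  by (induction A rule: infinite_finite_induct) auto

lemma block_cpm:
  fixes P Q :: "real mat"
  assumes P: "P \<in> carrier_mat l r" and Q: "Q \<in> carrier_mat r l"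
  shows "char_poly_matrix (four_block_mat (0\<^sub>m l l) P Q (0\<^sub>m r r)) =
    four_block_mat ([:0,1:] \<cdot>\<^sub>m 1\<^sub>m l) (map_mat (\<lambda>a. [:-a:]) P) (map_mat (\<lambda>a. [:-a:]) Q) ([:0,1:] \<cdot>\<^sub>m 1\<^sub>m r)"
proof (rule eq_matI)
  fix i j assume i: "i < dim_row (four_block_mat ([:0,1:] \<cdot>\<^sub>m 1\<^sub>m l) (map_mat (\<lambda>a. [:-a:]) P) (map_mat (\<lambda>a. [:-a:]) Q) ([:0,1:] \<cdot>\<^sub>m 1\<^sub>m r))"
    and j: "j < dim_col (four_block_mat ([:0,1:] \<cdot>\<^sub>m 1\<^sub>m l) (map_mat (\<lambda>a. [:-a:]) P) (map_mat (\<lambda>a. [:-a:]) Q) ([:0,1:] \<cdot>\<^sub>m 1\<^sub>m r))"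
  have i': "i < l + r" and j': "j < l + r" using i j by simp_all
  show "char_poly_matrix (four_block_mat (0\<^sub>m l l) P Q (0\<^sub>m r r)) $$ (i, j) =
    four_block_mat ([:0,1:] \<cdot>\<^sub>m 1\<^sub>m l) (map_mat (\<lambda>a. [:-a:]) P) (map_mat (\<lambda>a. [:-a:]) Q) ([:0,1:] \<cdot>\<^sub>m 1\<^sub>m r) $$ (i, j)"
    using P Q i' j' by (auto simp: char_poly_matrix_def)
qed (use P Q in \<open>auto simp: char_poly_matrix_def\<close>)

lemma block_charpoly:
  fixes P Q :: "real mat"
  assumes P: "P \<in> carrier_mat l r" and Q: "Q \<in> carrier_mat r l"
  shows "[:0,1:]^l * char_poly (four_block_mat (0\<^sub>m l l) P Q (0\<^sub>m r r)) =
         [:0,1:]^r * (char_poly (P * Q) \<circ>\<^sub>p [:0,0,1:])"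
proof -
  have crh: "comm_ring_hom (\<lambda>q::real poly. q \<circ>\<^sub>p [:0,0,1:])"
    by unfold_locales (auto simp: pcompose_add pcompose_mult pcompose_1)
  define X :: "real poly" where "X = [:0,1:]"
  define NP where "NP = map_mat (\<lambda>a. [:-a:]) P"
  define NQ where "NQ = map_mat (\<lambda>a. [:-a:]) Q"
  define P' where "P' = map_mat (\<lambda>a. [:a:]) P"
  define C where "C = four_block_mat (X \<cdot>\<^sub>m 1\<^sub>m l) NP NQ (X \<cdot>\<^sub>m 1\<^sub>m r)"
  define U where "U = four_block_mat (X \<cdot>\<^sub>m 1\<^sub>m l) P' (0\<^sub>m r l) (X \<cdot>\<^sub>m 1\<^sub>m r)"
  have NP: "NP \<in> carrier_mat l r" and NQ: "NQ \<in> carrier_mat r l" and P': "P' \<in> carrier_mat l r"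
    using P Q unfolding NP_def NQ_def P'_def by auto
  have I1: "X \<cdot>\<^sub>m 1\<^sub>m l \<in> carrier_mat l l" and I2: "X \<cdot>\<^sub>m 1\<^sub>m r \<in> carrier_mat r r" by auto
  have CC: "C \<in> carrier_mat (l+r) (l+r)" unfolding C_def using I1 I2 by simp
  have UC: "U \<in> carrier_mat (l+r) (l+r)" unfolding U_def using I1 I2 by simp
  have cpT: "char_poly (four_block_mat (0\<^sub>m l l) P Q (0\<^sub>m r r)) = det C"
    unfolding char_poly_def C_def NP_def NQ_def X_def using block_cpm[OF P Q] by simp
  have detU: "det U = X^l * X^r"
    unfolding U_def by (subst det_four_block_mat_lower_left_zero[OF I1 P' refl I2]) simp
  define B11 where "B11 = (X \<cdot>\<^sub>m 1\<^sub>m l) * (X \<cdot>\<^sub>m 1\<^sub>m l) + P' * NQ"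
  define B12 where "B12 = (X \<cdot>\<^sub>m 1\<^sub>m l) * NP + P' * (X \<cdot>\<^sub>m 1\<^sub>m r)"
  define B21 where "B21 = 0\<^sub>m r l * (X \<cdot>\<^sub>m 1\<^sub>m l) + (X \<cdot>\<^sub>m 1\<^sub>m r) * NQ"
  define B22 where "B22 = 0\<^sub>m r l * NP + (X \<cdot>\<^sub>m 1\<^sub>m r) * (X \<cdot>\<^sub>m 1\<^sub>m r)"
  have UCeq: "U * C = four_block_mat B11 B12 B21 B22"
    unfolding U_def C_def B11_def B12_def B21_def B22_def
    by (rule mult_four_block_mat[OF I1 P' zero_carrier_mat I2 I1 NP NQ I2])
  have B12: "B12 = 0\<^sub>m l r"
  proof (rule eq_matI)
    fix i j assume "i < dim_row (0\<^sub>m l r :: real poly mat)" "j < dim_col (0\<^sub>m l r :: real poly mat)"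
    hence i: "i < l" and j: "j < r" by auto
    have "B12 = X \<cdot>\<^sub>m NP + X \<cdot>\<^sub>m P'"
      unfolding B12_def using NP P'
      by (simp add: mult_smult_assoc_mat[OF one_carrier_mat NP] mult_smult_distrib[OF P' one_carrier_mat])
    hence "B12 $$ (i,j) = X * [:-(P$$(i,j)):] + X * [:P$$(i,j):]"
      using i j P unfolding NP_def P'_def by simp
    also have "\<dots> = X * ([:-(P$$(i,j)):] + [:P$$(i,j):])" by (simp only: distrib_left)
    also have "\<dots> = 0" by simp
    finally show "B12 $$ (i,j) = 0\<^sub>m l r $$ (i,j)" using i j by simp
  qed (use P' NP in \<open>simp_all add: B12_def\<close>)
  have B22: "B22 = (X*X) \<cdot>\<^sub>m 1\<^sub>m r"
  proof (rule eq_matI)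
    fix i j assume "i < dim_row ((X*X) \<cdot>\<^sub>m 1\<^sub>m r)" "j < dim_col ((X*X) \<cdot>\<^sub>m 1\<^sub>m r)"
    hence i: "i < r" and j: "j < r" by auto
    have "B22 = X \<cdot>\<^sub>m (X \<cdot>\<^sub>m 1\<^sub>m r)"
      unfolding B22_def using NP
      by (simp add: mult_smult_assoc_mat[OF one_carrier_mat I2])
    thus "B22 $$ (i,j) = ((X*X) \<cdot>\<^sub>m 1\<^sub>m r) $$ (i,j)" using i j by simp
  qed (simp_all add: B22_def)
  have B11: "B11 = map_mat (\<lambda>p. p \<circ>\<^sub>p [:0,0,1:]) (char_poly_matrix (P * Q))"
  proof (rule eq_matI)
    fix i j assume "i < dim_row (map_mat (\<lambda>p. p \<circ>\<^sub>p [:0,0,1:]) (char_poly_matrix (P * Q)))"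
      "j < dim_col (map_mat (\<lambda>p. p \<circ>\<^sub>p [:0,0,1:]) (char_poly_matrix (P * Q)))"
    hence i: "i < l" and j: "j < l" using P Q by (auto simp: char_poly_matrix_def)
    have "B11 = X \<cdot>\<^sub>m (X \<cdot>\<^sub>m 1\<^sub>m l) + P' * NQ"
      unfolding B11_def by (simp add: mult_smult_assoc_mat[OF one_carrier_mat I1])
    hence "B11 $$ (i,j) = X * (X * (if i = j then 1 else 0)) + (P' * NQ) $$ (i,j)"
      using i j P' NQ by simp
    also have "(P' * NQ) $$ (i,j) = (\<Sum>k\<in>{0..<r}. [:P$$(i,k):] * [:-(Q$$(k,j)):])"
      using i j P Q unfolding P'_def NQ_def by (simp add: scalar_prod_def)
    also have "\<dots> = (\<Sum>k\<in>{0..<r}. [:-(P$$(i,k) * Q$$(k,j)):])"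
      by (rule sum.cong) simp_all
    also have "\<dots> = [:-(\<Sum>k\<in>{0..<r}. P$$(i,k) * Q$$(k,j)):]"
      by (simp add: const_poly_sum sum_negf)
    also have "(\<Sum>k\<in>{0..<r}. P$$(i,k) * Q$$(k,j)) = (P * Q) $$ (i,j)"
      using i j P Q by (simp add: scalar_prod_def)
    finally have "B11 $$ (i,j) = X * (X * (if i = j then 1 else 0)) + [:-((P * Q) $$ (i,j)):]" .
    moreover have "map_mat (\<lambda>p. p \<circ>\<^sub>p [:0,0,1:]) (char_poly_matrix (P * Q)) $$ (i,j)
        = ([:0,1:] * (if i = j then 1 else 0) + [:-((P * Q) $$ (i,j)):]) \<circ>\<^sub>p [:0,0,1:]"
      using i j P Q by (simp add: char_poly_matrix_def)
    moreover have "([:0,1:] * (if i = j then 1 else 0) + [:-((P * Q) $$ (i,j)):]) \<circ>\<^sub>p [:0,0,1:]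
        = X * (X * (if i = j then 1 else 0)) + [:-((P * Q) $$ (i,j)):]"
      unfolding X_def by (cases "i = j") (simp_all add: pcompose_pCons)
    ultimately show "B11 $$ (i,j) = map_mat (\<lambda>p. p \<circ>\<^sub>p [:0,0,1:]) (char_poly_matrix (P * Q)) $$ (i,j)"
      by simp
  qed (use P Q P' NQ in \<open>simp_all add: B11_def char_poly_matrix_def\<close>)
  have B11c: "B11 \<in> carrier_mat l l" using P Q unfolding B11 by (simp add: char_poly_matrix_def)
  have B21c: "B21 \<in> carrier_mat r l" unfolding B21_def by (rule add_carrier_mat[OF mult_carrier_mat[OF I2 NQ]])
  have "det (U * C) = det U * det C" by (rule det_mult[OF UC CC])
  also have "det (U * C) = det B11 * det B22"
    unfolding UCeq B12 by (rule det_four_block_mat_upper_right_zero[OF B11c refl B21c]) (simp add: B22)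
  also have "det B11 = char_poly (P * Q) \<circ>\<^sub>p [:0,0,1:]"
    unfolding B11 char_poly_def by (rule comm_ring_hom.hom_det[OF crh])
  also have "det B22 = X^r * X^r" unfolding B22 by (simp add: power_mult_distrib)
  finally have "(char_poly (P * Q) \<circ>\<^sub>p [:0,0,1:]) * (X^r * X^r) = X^l * X^r * det C" unfolding detU .
  hence "X^r * (X^r * (char_poly (P * Q) \<circ>\<^sub>p [:0,0,1:])) = X^r * (X^l * det C)" by (simp add: mult_ac)
  hence "X^r * (char_poly (P * Q) \<circ>\<^sub>p [:0,0,1:]) = X^l * det C"
    by (rule mult_left_cancel[THEN iffD1, rotated]) (simp add: X_def)
  thus ?thesis unfolding cpT X_def by simp
qed

definition Wm :: "real list \<Rightarrow> real multiset" where
  "Wm mus = sum_list (map (\<lambda>\<mu>. {#sqrt \<mu>, - sqrt \<mu>#}) mus)"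

lemma proots_X_pow: "proots ([:0,1:]^k :: real poly) = replicate_mset k 0"
proof (induction k)
  case 0 thus ?case by simp
next
  case (Suc k)
  have "proots ([:0,1:]^Suc k :: real poly) = proots ([:0,1:] * [:0,1:]^k :: real poly)" by simp
  also have "\<dots> = proots ([:0,1:] :: real poly) + proots ([:0,1:]^k :: real poly)"
    by (rule proots_mult) simp_all
  also have "\<dots> = {#0#} + replicate_mset k 0" using Suc proots_linear_factor[of "0::real"] by simp
  finally show ?case by simp
qed

lemma pcompose_prod_list_sq:
  "(\<Prod>\<mu>\<leftarrow>mus. [:-\<mu>,1:]) \<circ>\<^sub>p [:0,0,1:] = (\<Prod>\<mu>\<leftarrow>mus. [:-\<mu>,0,1:] :: real poly)"
proof (induction mus)
  case Nil thus ?case by (simp add: pcompose_1)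
next
  case (Cons \<mu> mus)
  have lin: "[:-\<mu>,1:] \<circ>\<^sub>p [:0,0,1:] = ([:-\<mu>,0,1:] :: real poly)" by (simp add: pcompose_pCons)
  have "(\<Prod>\<mu>\<leftarrow>\<mu>#mus. [:-\<mu>,1:]) \<circ>\<^sub>p [:0,0,1:] = ([:-\<mu>,1:] \<circ>\<^sub>p [:0,0,1:]) * ((\<Prod>\<mu>\<leftarrow>mus. [:-\<mu>,1:]) \<circ>\<^sub>p [:0,0,1:])"
    by (simp only: prod_list.Cons list.map pcompose_mult)
  thus ?case using Cons.IH lin by simp
qed

lemma sq_factor: "(\<mu>::real) \<ge> 0 \<Longrightarrow> [:-\<mu>,0,1:] = [:-sqrt \<mu>,1:] * [:sqrt \<mu>,1:]"
  by (simp add: algebra_simps)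

lemma proots_sq_prod:
  assumes "\<forall>\<mu>\<in>set mus. \<mu> \<ge> 0"
  shows "proots (\<Prod>\<mu>\<leftarrow>mus. [:-\<mu>,0,1:] :: real poly) = Wm mus"
  using assms
proof (induction mus)
  case Nil thus ?case by (simp add: Wm_def)
next
  case (Cons \<mu> mus)
  have h: "\<mu> \<ge> 0" using Cons.prems by simp
  have nz: "(\<Prod>\<mu>\<leftarrow>mus. [:-\<mu>,0,1:] :: real poly) \<noteq> 0"
  proof -
    have "0 \<notin> set (map (\<lambda>\<mu>. [:-\<mu>,0,1:] :: real poly) mus)"
    proof
      assume "0 \<in> set (map (\<lambda>\<mu>. [:-\<mu>,0,1:] :: real poly) mus)"
      then obtain \<mu> where "[:-\<mu>,0,1:] = (0 :: real poly)" by auto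
      thus False by simp
    qed
    thus ?thesis by (simp only: prod_list_zero_iff not_False_eq_True)
  qed
  have "proots (\<Prod>\<mu>\<leftarrow>\<mu>#mus. [:-\<mu>,0,1:] :: real poly) = proots ([:-\<mu>,0,1:] * (\<Prod>\<mu>\<leftarrow>mus. [:-\<mu>,0,1:]))"
    by simp
  also have "\<dots> = proots [:-\<mu>,0,1:] + proots (\<Prod>\<mu>\<leftarrow>mus. [:-\<mu>,0,1:])"
    by (rule proots_mult[OF _ nz]) simp
  also have "proots [:-\<mu>,0,1:] = proots ([:-sqrt \<mu>,1:] * [:sqrt \<mu>,1:])" using sq_factor[OF h] by simp
  also have "\<dots> = {#sqrt \<mu>, - sqrt \<mu>#}"
    by (subst proots_mult) simp_all
  finally show ?case using Cons by (simp add: Wm_def)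
qed

lemma spec_struct:
  fixes P Q :: "real mat"
  assumes P: "P \<in> carrier_mat l r" and Q: "Q \<in> carrier_mat r l"
    and cPQ: "char_poly (P * Q) = (\<Prod>\<mu>\<leftarrow>mus. [:-\<mu>,1:])" and nn: "\<forall>\<mu>\<in>set mus. \<mu> \<ge> 0"
  shows "replicate_mset l 0 + proots (char_poly (four_block_mat (0\<^sub>m l l) P Q (0\<^sub>m r r)))
       = replicate_mset r 0 + Wm mus"
proof -
  let ?T = "four_block_mat (0\<^sub>m l l) P Q (0\<^sub>m r r)"
  have Tc: "?T \<in> carrier_mat (l+r) (l+r)" using P Q by simp
  have "coeff (char_poly ?T) (l+r) = 1" using degree_monic_char_poly[OF Tc] by simp
  hence nz: "char_poly ?T \<noteq> 0" by auto
  have nz2: "(\<Prod>\<mu>\<leftarrow>mus. [:-\<mu>,0,1:] :: real poly) \<noteq> 0"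
  proof -
    have "0 \<notin> set (map (\<lambda>\<mu>. [:-\<mu>,0,1:] :: real poly) mus)"
    proof
      assume "0 \<in> set (map (\<lambda>\<mu>. [:-\<mu>,0,1:] :: real poly) mus)"
      then obtain \<mu> where "[:-\<mu>,0,1:] = (0 :: real poly)" by auto
      thus False by simp
    qed
    thus ?thesis by (simp only: prod_list_zero_iff not_False_eq_True)
  qed
  have eq: "[:0,1:]^l * char_poly ?T = [:0,1:]^r * (\<Prod>\<mu>\<leftarrow>mus. [:-\<mu>,0,1:])"
    using block_charpoly[OF P Q] unfolding cPQ pcompose_prod_list_sq .
  have "replicate_mset l 0 + proots (char_poly ?T) = proots ([:0,1:]^l * char_poly ?T)"
    by (subst proots_mult) (simp_all add: nz proots_X_pow)
  also have "\<dots> = proots ([:0,1:]^r * (\<Prod>\<mu>\<leftarrow>mus. [:-\<mu>,0,1:]))" unfolding eq ..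
  also have "\<dots> = replicate_mset r 0 + Wm mus"
    by (subst proots_mult[OF _ nz2]) (simp_all add: proots_X_pow proots_sq_prod[OF nn])
  finally show ?thesis .
qed

lemma degree_Inl: "degree G (Inl a) = card {b \<in> rpart G. edge G a b}"
proof -
  have "{u \<in> verts G. adj G (Inl a) u} = Inr ` {b \<in> rpart G. edge G a b}"
  proof
    show "{u \<in> verts G. adj G (Inl a) u} \<subseteq> Inr ` {b \<in> rpart G. edge G a b}"
    proof
      fix u assume u: "u \<in> {u \<in> verts G. adj G (Inl a) u}"
      show "u \<in> Inr ` {b \<in> rpart G. edge G a b}"
      proof (cases u)
        case (Inl x) thus ?thesis using u by simp
      next
        case (Inr y) thus ?thesis using u by (auto simp: verts_def)
      qed
    qed
    show "Inr ` {b \<in> rpart G. edge G a b} \<subseteq> {u \<in> verts G. adj G (Inl a) u}"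
      by (auto simp: verts_def)
  qed
  thus ?thesis unfolding degree_def by (simp add: card_image)
qed

lemma degree_Inr: "degree G (Inr b) = card {a \<in> lpart G. edge G a b}"
proof -
  have "{u \<in> verts G. adj G (Inr b) u} = Inl ` {a \<in> lpart G. edge G a b}"
  proof
    show "{u \<in> verts G. adj G (Inr b) u} \<subseteq> Inl ` {a \<in> lpart G. edge G a b}"
    proof
      fix u assume u: "u \<in> {u \<in> verts G. adj G (Inr b) u}"
      show "u \<in> Inl ` {a \<in> lpart G. edge G a b}"
      proof (cases u)
        case (Inr x) thus ?thesis using u by simp
      next
        case (Inl y) thus ?thesis using u by (auto simp: verts_def)
      qed
    qed
    show "Inl ` {a \<in> lpart G. edge G a b} \<subseteq> {u \<in> verts G. adj G (Inr b) u}"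
      by (auto simp: verts_def)
  qed
  thus ?thesis unfolding degree_def by (simp add: card_image)
qed

definition gidx :: "(nat \<Rightarrow> 'a) \<Rightarrow> (nat \<Rightarrow> 'b) \<Rightarrow> nat \<Rightarrow> nat \<Rightarrow> 'a + 'b" where
  "gidx fL fR l i = (if i < l then Inl (fL i) else Inr (fR (i - l)))"

lemma gidx_bij:
  assumes bL: "bij_betw fL {0..<l} (lpart G)" and bR: "bij_betw fR {0..<r} (rpart G)"
  shows "bij_betw (gidx fL fR l) {0..<l+r} (verts G)"
proof (rule bij_betw_imageI)
  have iL: "inj_on fL {0..<l}" and iR: "inj_on fR {0..<r}"
    using bL bR bij_betw_imp_inj_on by blast+
  show "inj_on (gidx fL fR l) {0..<l+r}"
  proof (rule inj_onI)
    fix i j assume i: "i \<in> {0..<l+r}" and j: "j \<in> {0..<l+r}" and eq: "gidx fL fR l i = gidx fL fR l j"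
    show "i = j"
    proof (cases "i < l")
      case True
      show ?thesis
      proof (cases "j < l")
        case True
        hence "fL i = fL j" using \<open>i < l\<close> eq by (simp add: gidx_def)
        thus ?thesis using inj_onD[OF iL] \<open>i < l\<close> True by simp
      next
        case False thus ?thesis using \<open>i < l\<close> eq by (simp add: gidx_def)
      qed
    next
      case False
      show ?thesis
      proof (cases "j < l")
        case True thus ?thesis using \<open>\<not> i < l\<close> eq by (simp add: gidx_def)
      next
        case False
        hence "fR (i - l) = fR (j - l)" using \<open>\<not> i < l\<close> eq by (simp add: gidx_def)
        hence "i - l = j - l" using inj_onD[OF iR] i j \<open>\<not> i < l\<close> False by simp
        thus ?thesis using \<open>\<not> i < l\<close> False by simp
      qed
    qed
  qed
  show "gidx fL fR l ` {0..<l+r} = verts G"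
  proof
    show "gidx fL fR l ` {0..<l+r} \<subseteq> verts G"
    proof
      fix x assume "x \<in> gidx fL fR l ` {0..<l+r}"
      then obtain i where i: "i < l + r" "x = gidx fL fR l i" by auto
      show "x \<in> verts G"
      proof (cases "i < l")
        case True
        hence "fL i \<in> lpart G" using bij_betwE[OF bL] by simp
        thus ?thesis using i True by (auto simp: gidx_def verts_def)
      next
        case False
        hence "i - l < r" using i by simp
        hence "fR (i - l) \<in> rpart G" using bij_betwE[OF bR] by simp
        thus ?thesis using i False by (auto simp: gidx_def verts_def)
      qed
    qed
    show "verts G \<subseteq> gidx fL fR l ` {0..<l+r}"
    proof
      fix x assume x: "x \<in> verts G"
      show "x \<in> gidx fL fR l ` {0..<l+r}"
      proof (cases x)
        case (Inl a)
        hence "a \<in> lpart G" using x by (auto simp: verts_def)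
        then obtain i where "i \<in> {0..<l}" "a = fL i" using bij_betw_imp_surj_on[OF bL] by blast
        thus ?thesis using Inl by (auto simp: gidx_def image_iff intro!: bexI[of _ i])
      next
        case (Inr b)
        hence "b \<in> rpart G" using x by (auto simp: verts_def)
        then obtain j where j: "j \<in> {0..<r}" "b = fR j" using bij_betw_imp_surj_on[OF bR] by blast
        have "gidx fL fR l (l + j) = x" using Inr j by (simp add: gidx_def)
        moreover have "l + j \<in> {0..<l+r}" using j by simp
        ultimately show ?thesis by (metis image_eqI)
      qed
    qed
  qed
qed

definition Pm :: "('a, 'b) bigraph \<Rightarrow> (nat \<Rightarrow> 'a) \<Rightarrow> (nat \<Rightarrow> 'b) \<Rightarrow> nat \<Rightarrow> nat \<Rightarrow> real mat" where
  "Pm G fL fR l r = mat l r (\<lambda>(i,j). transition G (Inl (fL i)) (Inr (fR j)))"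

definition Qm :: "('a, 'b) bigraph \<Rightarrow> (nat \<Rightarrow> 'a) \<Rightarrow> (nat \<Rightarrow> 'b) \<Rightarrow> nat \<Rightarrow> nat \<Rightarrow> real mat" where
  "Qm G fL fR l r = mat r l (\<lambda>(j,i). transition G (Inr (fR j)) (Inl (fL i)))"

lemma T_block:
  "mat (l+r) (l+r) (\<lambda>(i,j). transition G (gidx fL fR l i) (gidx fL fR l j))
     = four_block_mat (0\<^sub>m l l) (Pm G fL fR l r) (Qm G fL fR l r) (0\<^sub>m r r)"
proof (rule eq_matI)
  fix i j assume "i < dim_row (four_block_mat (0\<^sub>m l l) (Pm G fL fR l r) (Qm G fL fR l r) (0\<^sub>m r r))"
    "j < dim_col (four_block_mat (0\<^sub>m l l) (Pm G fL fR l r) (Qm G fL fR l r) (0\<^sub>m r r))"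
  hence i: "i < l + r" and j: "j < l + r" by (simp_all add: Pm_def Qm_def)
  show "mat (l+r) (l+r) (\<lambda>(i,j). transition G (gidx fL fR l i) (gidx fL fR l j)) $$ (i,j) =
     four_block_mat (0\<^sub>m l l) (Pm G fL fR l r) (Qm G fL fR l r) (0\<^sub>m r r) $$ (i,j)"
    using i j by (simp add: Pm_def Qm_def gidx_def transition_def)
qed (simp_all add: Pm_def Qm_def)

lemma charpoly_T:
  assumes bL: "bij_betw fL {0..<l} (lpart G)" and bR: "bij_betw fR {0..<r} (rpart G)"
  shows "charpoly_on (verts G) (transition G) =
    char_poly (four_block_mat (0\<^sub>m l l) (Pm G fL fR l r) (Qm G fL fR l r) (0\<^sub>m r r))"
  using charpoly_on_char_poly[OF gidx_bij[OF bL bR], of "transition G"] T_block[of l r G fL fR] by simp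

lemma card_enum:
  assumes "bij_betw f {0..<(n::nat)} A"
  shows "card {i \<in> {..<n}. P (f i)} = card {a \<in> A. P a}"
proof -
  have inj: "inj_on f {i \<in> {..<n}. P (f i)}"
    using bij_betw_imp_inj_on[OF assms] by (rule inj_on_subset) auto
  have "f ` {i \<in> {..<n}. P (f i)} = {a \<in> A. P a}"
  proof
    show "f ` {i \<in> {..<n}. P (f i)} \<subseteq> {a \<in> A. P a}" using bij_betwE[OF assms] by auto
    show "{a \<in> A. P a} \<subseteq> f ` {i \<in> {..<n}. P (f i)}"
    proof
      fix a assume a: "a \<in> {a \<in> A. P a}"
      then obtain i where "i \<in> {0..<n}" "a = f i" using bij_betw_imp_surj_on[OF assms] by blast
      thus "a \<in> f ` {i \<in> {..<n}. P (f i)}" using a by auto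
    qed
  qed
  thus ?thesis using card_image[OF inj] by simp
qed

lemma sum_ind: "finite S \<Longrightarrow> (\<Sum>i\<in>S. if P i then (c::real) else 0) = c * card {i \<in> S. P i}"
  by (simp add: sum.inter_filter[symmetric])

lemma PQ_mus:
  assumes bL: "bij_betw fL {0..<l} (lpart G)" and bR: "bij_betw fR {0..<r} (rpart G)"
    and dL: "\<And>a. a \<in> lpart G \<Longrightarrow> degree G (Inl a) = dL"
    and dR: "\<And>b. b \<in> rpart G \<Longrightarrow> degree G (Inr b) = dR"
    and dLp: "dL > 0" and dRp: "dR > 0" and lpos: "l > 0"
  shows "\<exists>mus. char_poly (Pm G fL fR l r * Qm G fL fR l r) = (\<Prod>\<mu>\<leftarrow>mus. [:-\<mu>,1:]) \<and>
    length mus = l \<and> (\<forall>\<mu>\<in>set mus. 0 \<le> \<mu> \<and> \<mu> \<le> 1) \<and> 1 \<in> set mus"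
proof -
  let ?P = "Pm G fL fR l r" and ?Q = "Qm G fL fR l r"
  let ?e = "\<lambda>i k. edge G (fL i) (fR k)"
  define Bm where "Bm = mat l r (\<lambda>(i,k). if ?e i k then 1 / sqrt (real dL * real dR) else 0)"
  have fLin: "\<And>i. i < l \<Longrightarrow> fL i \<in> lpart G" using bij_betwE[OF bL] by simp
  have fRin: "\<And>k. k < r \<Longrightarrow> fR k \<in> rpart G" using bij_betwE[OF bR] by simp
  have Pij: "?P $$ (i,k) = (if ?e i k then 1 / real dL else 0)" if "i < l" "k < r" for i k
    using that fLin[OF that(1)] dL by (simp add: Pm_def transition_def)
  have Qij: "?Q $$ (k,i) = (if ?e i k then 1 / real dR else 0)" if "i < l" "k < r" for i k
    using that fRin[OF that(2)] dR by (simp add: Qm_def transition_def)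
  have Pc: "?P \<in> carrier_mat l r" and Qc: "?Q \<in> carrier_mat r l" by (simp_all add: Pm_def Qm_def)
  have Mc: "?P * ?Q \<in> carrier_mat l l" using Pc Qc by simp
  have Bc: "Bm \<in> carrier_mat l r" by (simp add: Bm_def)
  have Mij: "(?P * ?Q) $$ (i,j) = (\<Sum>k<r. (if ?e i k then 1 / real dL else 0) * (if ?e j k then 1 / real dR else 0))"
    if "i < l" "j < l" for i j
  proof -
    have "(?P * ?Q) $$ (i,j) = (\<Sum>k<r. ?P $$ (i,k) * ?Q $$ (k,j))"
      using that Pc Qc by (simp add: scalar_prod_def atLeast0LessThan)
    also have "\<dots> = (\<Sum>k<r. (if ?e i k then 1 / real dL else 0) * (if ?e j k then 1 / real dR else 0))"
      by (rule sum.cong[OF refl]) (simp add: Pij Qij that)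
    finally show ?thesis .
  qed
  have sq: "sqrt (real dL * real dR) * sqrt (real dL * real dR) = real dL * real dR" by simp
  have MB: "(?P * ?Q) $$ (i,j) = (\<Sum>k<r. Bm $$ (i,k) * Bm $$ (j,k))" if "i < l" "j < l" for i j
    unfolding Mij[OF that]
  proof (rule sum.cong[OF refl])
    fix k assume k: "k \<in> {..<r}"
    have "Bm $$ (i,k) * Bm $$ (j,k) = (if ?e i k then 1 / sqrt (real dL * real dR) else 0) *
          (if ?e j k then 1 / sqrt (real dL * real dR) else 0)" using that k by (simp add: Bm_def)
    also have "\<dots> = (if ?e i k then 1 / real dL else 0) * (if ?e j k then 1 / real dR else 0)"
      using sq by (auto simp: field_simps)
    finally show "(if ?e i k then 1 / real dL else 0) * (if ?e j k then 1 / real dR else 0) = Bm $$ (i,k) * Bm $$ (j,k)" by simp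
  qed
  have nonneg: "(?P * ?Q) $$ (i,j) \<ge> 0" if "i < l" "j < l" for i j
    unfolding Mij[OF that] by (rule sum_nonneg) simp
  have colsum: "(\<Sum>j<l. (if ?e j k then 1 / real dR else 0)) = 1" if k: "k < r" for k
  proof -
    have "(\<Sum>j<l. (if ?e j k then 1 / real dR else 0)) = 1 / real dR * card {j \<in> {..<l}. ?e j k}"
      by (rule sum_ind) simp
    also have "card {j \<in> {..<l}. ?e j k} = card {a \<in> lpart G. edge G a (fR k)}"
      by (rule card_enum[OF bL])
    also have "\<dots> = dR" using dR[OF fRin[OF k]] degree_Inr[of G "fR k"] by simp
    finally show ?thesis using dRp by simp
  qed
  have rowsum: "(\<Sum>k<r. (if ?e i k then 1 / real dL else 0)) = 1" if i: "i < l" for i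
  proof -
    have "(\<Sum>k<r. (if ?e i k then 1 / real dL else 0)) = 1 / real dL * card {k \<in> {..<r}. ?e i k}"
      by (rule sum_ind) simp
    also have "card {k \<in> {..<r}. ?e i k} = card {b \<in> rpart G. edge G (fL i) b}"
      by (rule card_enum[OF bR])
    also have "\<dots> = dL" using dL[OF fLin[OF i]] degree_Inl[of G "fL i"] by simp
    finally show ?thesis using dLp by simp
  qed
  have rows: "(\<Sum>j<l. (?P * ?Q) $$ (i,j)) = 1" if i: "i < l" for i
  proof -
    have "(\<Sum>j<l. (?P * ?Q) $$ (i,j)) = (\<Sum>j<l. \<Sum>k<r. (if ?e i k then 1 / real dL else 0) * (if ?e j k then 1 / real dR else 0))"
      by (rule sum.cong[OF refl]) (simp add: Mij i)
    also have "\<dots> = (\<Sum>k<r. \<Sum>j<l. (if ?e i k then 1 / real dL else 0) * (if ?e j k then 1 / real dR else 0))"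
      by (rule sum.swap)
    also have "\<dots> = (\<Sum>k<r. (if ?e i k then 1 / real dL else 0) * (\<Sum>j<l. (if ?e j k then 1 / real dR else 0)))"
      by (simp only: sum_distrib_left)
    also have "\<dots> = (\<Sum>k<r. (if ?e i k then 1 / real dL else 0))"
      by (rule sum.cong[OF refl]) (simp add: colsum)
    also have "\<dots> = 1" by (rule rowsum[OF i])
    finally show ?thesis .
  qed
  show ?thesis by (rule gram_split[OF Mc Bc MB nonneg rows lpos])
qed

lemma degree_prod_Inl:
  "degree (partite_product G1 G2) (Inl (a1,a2)) = degree G1 (Inl a1) * degree G2 (Inl a2)"
proof -
  have "{b \<in> rpart (partite_product G1 G2). edge (partite_product G1 G2) (a1,a2) b}
      = {b1 \<in> rpart G1. edge G1 a1 b1} \<times> {b2 \<in> rpart G2. edge G2 a2 b2}"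
    by (auto simp: partite_product_def)
  thus ?thesis by (simp add: degree_Inl card_cartesian_product)
qed

lemma degree_prod_Inr:
  "degree (partite_product G1 G2) (Inr (b1,b2)) = degree G1 (Inr b1) * degree G2 (Inr b2)"
proof -
  have "{a \<in> lpart (partite_product G1 G2). edge (partite_product G1 G2) a (b1,b2)}
      = {a1 \<in> lpart G1. edge G1 a1 b1} \<times> {a2 \<in> lpart G2. edge G2 a2 b2}"
    by (auto simp: partite_product_def)
  thus ?thesis by (simp add: degree_Inr card_cartesian_product)
qed

lemma transition_prod_LR:
  "transition (partite_product G1 G2) (Inl (a1,a2)) (Inr (b1,b2)) =
   transition G1 (Inl a1) (Inr b1) * transition G2 (Inl a2) (Inr b2)"
  by (simp add: transition_def degree_prod_Inl) (simp add: partite_product_def)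

lemma transition_prod_RL:
  "transition (partite_product G1 G2) (Inr (b1,b2)) (Inl (a1,a2)) =
   transition G1 (Inr b1) (Inl a1) * transition G2 (Inr b2) (Inl a2)"
  by (simp add: transition_def degree_prod_Inr) (simp add: partite_product_def)

definition penum :: "(nat \<Rightarrow> 'a) \<Rightarrow> (nat \<Rightarrow> 'b) \<Rightarrow> nat \<Rightarrow> nat \<Rightarrow> 'a \<times> 'b" where
  "penum f1 f2 m k = (f1 (k div m), f2 (k mod m))"

lemma idx_bound: "i < (n::nat) \<Longrightarrow> j < m \<Longrightarrow> i * m + j < n * m"
proof -
  assume i: "i < n" and j: "j < m"
  have "i*m+j < i*m + m" using j by simp
  also have "\<dots> = (i+1)*m" by simp
  also have "\<dots> \<le> n*m" using i by (intro mult_right_mono) auto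
  finally show ?thesis .
qed

lemma penum_bij:
  assumes b1: "bij_betw f1 {0..<n} A" and b2: "bij_betw f2 {0..<m} B"
  shows "bij_betw (penum f1 f2 m) {0..<n*m} (A \<times> B)"
proof (rule bij_betw_imageI)
  have i1: "inj_on f1 {0..<n}" and i2: "inj_on f2 {0..<m}"
    using b1 b2 bij_betw_imp_inj_on by blast+
  show "inj_on (penum f1 f2 m) {0..<n*m}"
  proof (rule inj_onI)
    fix x y assume x: "x \<in> {0..<n*m}" and y: "y \<in> {0..<n*m}" and eq: "penum f1 f2 m x = penum f1 f2 m y"
    have mpos: "m > 0" using x by (cases m) auto
    have "x div m < n" "y div m < n" using x y mpos by (auto simp: less_mult_imp_div_less)
    moreover have "x mod m < m" "y mod m < m" using mpos by auto
    ultimately have "x div m = y div m" "x mod m = y mod m"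
      using eq inj_onD[OF i1] inj_onD[OF i2] by (auto simp: penum_def)
    thus "x = y" by (metis div_mult_mod_eq)
  qed
  show "penum f1 f2 m ` {0..<n*m} = A \<times> B"
  proof
    show "penum f1 f2 m ` {0..<n*m} \<subseteq> A \<times> B"
    proof
      fix z assume "z \<in> penum f1 f2 m ` {0..<n*m}"
      then obtain x where x: "x < n*m" "z = penum f1 f2 m x" by auto
      have mpos: "m > 0" using x by (cases m) auto
      have "x div m < n" using x mpos by (auto simp: less_mult_imp_div_less)
      moreover have "x mod m < m" using mpos by auto
      ultimately show "z \<in> A \<times> B" using x bij_betwE[OF b1] bij_betwE[OF b2] by (auto simp: penum_def)
    qed
    show "A \<times> B \<subseteq> penum f1 f2 m ` {0..<n*m}"
    proof
      fix z assume "z \<in> A \<times> B"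
      then obtain a b where z: "z = (a,b)" "a \<in> A" "b \<in> B" by auto
      obtain i where i: "i \<in> {0..<n}" "a = f1 i" using z(2) bij_betw_imp_surj_on[OF b1] by blast
      obtain j where j: "j \<in> {0..<m}" "b = f2 j" using z(3) bij_betw_imp_surj_on[OF b2] by blast
      have "penum f1 f2 m (i*m+j) = z" using i j z by (simp add: penum_def)
      moreover have "i*m+j \<in> {0..<n*m}" using i j idx_bound by simp
      ultimately show "z \<in> penum f1 f2 m ` {0..<n*m}" by (metis image_eqI)
    qed
  qed
qed

lemma PQ_prod:
  "Pm (partite_product G1 G2) (penum fL1 fL2 l2) (penum fR1 fR2 r2) (l1*l2) (r1*r2) *
   Qm (partite_product G1 G2) (penum fL1 fL2 l2) (penum fR1 fR2 r2) (l1*l2) (r1*r2)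
   = kron (Pm G1 fL1 fR1 l1 r1 * Qm G1 fL1 fR1 l1 r1) (Pm G2 fL2 fR2 l2 r2 * Qm G2 fL2 fR2 l2 r2)"
  (is "?PP * ?QQ = kron (?P1 * ?Q1) (?P2 * ?Q2)")
proof (rule eq_matI)
  have P1: "?P1 \<in> carrier_mat l1 r1" and Q1: "?Q1 \<in> carrier_mat r1 l1"
    and P2: "?P2 \<in> carrier_mat l2 r2" and Q2: "?Q2 \<in> carrier_mat r2 l2"
    by (simp_all add: Pm_def Qm_def)
  have M1: "?P1 * ?Q1 \<in> carrier_mat l1 l1" and M2: "?P2 * ?Q2 \<in> carrier_mat l2 l2"
    using P1 Q1 P2 Q2 by simp_all
  fix i j assume "i < dim_row (kron (?P1 * ?Q1) (?P2 * ?Q2))" "j < dim_col (kron (?P1 * ?Q1) (?P2 * ?Q2))"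
  hence i: "i < l1*l2" and j: "j < l1*l2" using kron_carrier[OF M1 M2] by auto
  have m: "l2 > 0" using i by (cases l2) auto
  have id: "i div l2 < l1" "j div l2 < l1" using i j m by (auto simp: less_mult_imp_div_less)
  have im: "i mod l2 < l2" "j mod l2 < l2" using m by auto
  have "(?PP * ?QQ) $$ (i,j) = (\<Sum>k<r1*r2. ?PP $$ (i,k) * ?QQ $$ (k,j))"
    using i j by (simp add: Pm_def Qm_def scalar_prod_def atLeast0LessThan)
  also have "\<dots> = (\<Sum>k<r1*r2. (?P1 $$ (i div l2, k div r2) * ?P2 $$ (i mod l2, k mod r2)) *
                       (?Q1 $$ (k div r2, j div l2) * ?Q2 $$ (k mod r2, j mod l2)))"
  proof (rule sum.cong[OF refl])
    fix k assume k: "k \<in> {..<r1*r2}"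
    hence k': "k < r1*r2" by simp
    have m2: "r2 > 0" using k' by (cases r2) auto
    have kd: "k div r2 < r1" using k' m2 by (auto simp: less_mult_imp_div_less)
    have km: "k mod r2 < r2" using m2 by auto
    show "?PP $$ (i,k) * ?QQ $$ (k,j) = (?P1 $$ (i div l2, k div r2) * ?P2 $$ (i mod l2, k mod r2)) *
                       (?Q1 $$ (k div r2, j div l2) * ?Q2 $$ (k mod r2, j mod l2))"
      using i j k' id im kd km
      by (simp add: Pm_def Qm_def penum_def transition_prod_LR transition_prod_RL)
  qed
  also have "\<dots> = (\<Sum>k1<r1. \<Sum>k2<r2. (?P1 $$ (i div l2, k1) * ?P2 $$ (i mod l2, k2)) *
                       (?Q1 $$ (k1, j div l2) * ?Q2 $$ (k2, j mod l2)))"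
    by (subst sum_divmod) (simp add: divmod_simps)
  also have "\<dots> = (\<Sum>k1<r1. ?P1 $$ (i div l2, k1) * ?Q1 $$ (k1, j div l2)) *
                  (\<Sum>k2<r2. ?P2 $$ (i mod l2, k2) * ?Q2 $$ (k2, j mod l2))"
    by (simp add: sum_product mult_ac)
  also have "\<dots> = (?P1 * ?Q1) $$ (i div l2, j div l2) * (?P2 * ?Q2) $$ (i mod l2, j mod l2)"
    using P1 Q1 P2 Q2 id im by (simp add: scalar_prod_def atLeast0LessThan)
  also have "\<dots> = kron (?P1 * ?Q1) (?P2 * ?Q2) $$ (i,j)"
    by (rule kron_index[OF M1 M2 i j, symmetric])
  finally show "(?PP * ?QQ) $$ (i,j) = kron (?P1 * ?Q1) (?P2 * ?Q2) $$ (i,j)" .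
qed (simp_all add: Pm_def Qm_def kron_def)

definition plist :: "real list \<Rightarrow> real list \<Rightarrow> real list" where
  "plist xs ys = concat (map (\<lambda>a. map (\<lambda>b. a * b) ys) xs)"

lemma prod_lessThan_nth: "(\<Prod>i<length xs. g (xs!i)) = prod_list (map g xs)"
proof (induction xs)
  case Nil thus ?case by simp
next
  case (Cons x xs)
  have "(\<Prod>i<length (x#xs). g ((x#xs)!i)) = g x * (\<Prod>i<length xs. g (xs!i))"
    by (simp add: prod.lessThan_Suc_shift del: prod.lessThan_Suc)
  thus ?case using Cons by simp
qed

lemma prod_list_concat_map: "prod_list (map f (concat xss)) = prod_list (map (\<lambda>xs. prod_list (map f xs)) xss)"
  by (induction xss) auto

lemma plist_prod:
  "(\<Prod>i<length xs. \<Prod>j<length ys. f (xs!i * ys!j)) = prod_list (map f (plist xs ys))"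
proof -
  have "(\<Prod>i<length xs. \<Prod>j<length ys. f (xs!i * ys!j)) = (\<Prod>i<length xs. prod_list (map (\<lambda>b. f (xs!i * b)) ys))"
    by (rule prod.cong[OF refl]) (rule prod_lessThan_nth)
  also have "\<dots> = prod_list (map (\<lambda>a. prod_list (map (\<lambda>b. f (a * b)) ys)) xs)"
    by (rule prod_lessThan_nth)
  also have "\<dots> = prod_list (map f (plist xs ys))"
    unfolding plist_def prod_list_concat_map by (simp add: comp_def)
  finally show ?thesis .
qed

definition specok :: "nat \<Rightarrow> nat \<Rightarrow> real list \<Rightarrow> real multiset \<Rightarrow> bool" where
  "specok l r mus Z \<longleftrightarrow> length mus = l \<and> l \<ge> 1 \<and> r \<ge> 1 \<and> (\<forall>\<mu>\<in>set mus. 0 \<le> \<mu> \<and> \<mu> \<le> 1) \<and>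
     1 \<in> set mus \<and> replicate_mset l 0 + Z = replicate_mset r 0 + Wm mus"

lemma Wm_mem: "z \<in># Wm mus \<longleftrightarrow> (\<exists>\<mu>\<in>set mus. z = sqrt \<mu> \<or> z = - sqrt \<mu>)"
  by (induction mus) (auto simp: Wm_def)

lemma Wm_Nil[simp]: "Wm [] = {#}"
  by (simp add: Wm_def)

lemma Wm_Cons: "Wm (\<mu> # mus) = {#sqrt \<mu>, - sqrt \<mu>#} + Wm mus"
  by (simp add: Wm_def)

lemma Wm_count0: "\<forall>\<mu>\<in>set mus. \<mu> \<ge> 0 \<Longrightarrow> count (Wm mus) 0 = 2 * count (mset mus) 0"
  by (induction mus) (auto simp: Wm_Cons)

lemma Wm_count1: "\<forall>\<mu>\<in>set mus. \<mu> \<ge> 0 \<Longrightarrow> count (Wm mus) 1 = count (mset mus) 1"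
proof (induction mus)
  case Nil thus ?case by (simp add: Wm_def)
next
  case (Cons \<mu> mus)
  have "\<mu> \<ge> 0" using Cons.prems by simp
  hence s0: "sqrt \<mu> \<ge> 0" by simp
  have "(sqrt \<mu> = 1) = (\<mu> = 1)" using \<open>\<mu> \<ge> 0\<close> by auto
  have "- sqrt \<mu> \<noteq> 1" using s0 by linarith
  thus ?case using Cons by (auto simp: Wm_Cons)
qed

lemma Wm_size: "size (Wm mus) = 2 * length mus"
  by (induction mus) (auto simp: Wm_Cons)

lemma specok_count:
  assumes "specok l r mus Z"
  shows "count Z z + (if z = 0 then l else 0) = (if z = 0 then r else 0) + count (Wm mus) z"
proof -
  have "count (replicate_mset l 0 + Z) z = count (replicate_mset r 0 + Wm mus) z"
    using assms unfolding specok_def by simp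
  thus ?thesis by (simp add: add.commute)
qed

lemma specok_countnz:
  assumes "specok l r mus Z" "z \<noteq> 0"
  shows "count Z z = count (Wm mus) z"
  using specok_count[OF assms(1), of z] assms(2) by simp

lemma S_mem:
  assumes "specok l r mus Z" "z \<noteq> 0" "z \<noteq> 1"
  shows "z \<in># Z - {#1#} \<longleftrightarrow> (\<exists>\<mu>\<in>set mus. z = sqrt \<mu> \<or> z = - sqrt \<mu>)"
proof -
  have "z \<in># Z - {#1#} \<longleftrightarrow> z \<in># Z" using assms(3) by (simp add: in_diff_count)
  also have "\<dots> \<longleftrightarrow> z \<in># Wm mus" using specok_countnz[OF assms(1,2)] by (simp add: count_greater_zero_iff[symmetric] del: count_greater_zero_iff)
  also have "\<dots> \<longleftrightarrow> (\<exists>\<mu>\<in>set mus. z = sqrt \<mu> \<or> z = - sqrt \<mu>)" by (rule Wm_mem)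
  finally show ?thesis .
qed

lemma S_one:
  assumes "specok l r mus Z"
  shows "1 \<in># Z - {#1#} \<longleftrightarrow> count (mset mus) 1 \<ge> 2"
proof -
  have nn: "\<forall>\<mu>\<in>set mus. \<mu> \<ge> 0" using assms unfolding specok_def by auto
  have "count Z 1 = count (mset mus) 1"
    using specok_countnz[OF assms, of 1] Wm_count1[OF nn] by simp
  thus ?thesis by (simp add: in_diff_count) linarith
qed

lemma one_in_Z:
  assumes "specok l r mus Z"
  shows "1 \<in># Z"
proof -
  have nn: "\<forall>\<mu>\<in>set mus. \<mu> \<ge> 0" and one: "1 \<in> set mus" using assms unfolding specok_def by auto
  have "count Z 1 = count (mset mus) 1"
    using specok_countnz[OF assms, of 1] Wm_count1[OF nn] by simp
  moreover have "count (mset mus) 1 > 0" using one by simp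
  ultimately show ?thesis by (simp del: count_greater_zero_iff add: count_greater_zero_iff[symmetric])
qed

lemma Z_le1:
  assumes "specok l r mus Z" "z \<in># Z"
  shows "z \<le> 1"
proof (cases "z = 0")
  case True thus ?thesis by simp
next
  case False
  have "z \<in># Wm mus" using specok_countnz[OF assms(1) False] assms(2) by (metis count_greater_zero_iff)
  then obtain \<mu> where "\<mu> \<in> set mus" "z = sqrt \<mu> \<or> z = - sqrt \<mu>" using Wm_mem by blast
  moreover have "0 \<le> \<mu> \<and> \<mu> \<le> 1" using assms(1) \<open>\<mu> \<in> set mus\<close> unfolding specok_def by auto
  hence "0 \<le> sqrt \<mu> \<and> sqrt \<mu> \<le> 1" by simp
  ultimately show ?thesis by linarith
qed

lemma Z_size:
  assumes "specok l r mus Z"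
  shows "size Z = l + r"
proof -
  have eq: "replicate_mset l 0 + Z = replicate_mset r 0 + Wm mus" and len: "length mus = l"
    using assms unfolding specok_def by auto
  have "size (replicate_mset l 0 + Z) = size (replicate_mset r 0 + Wm mus)" by (simp only: eq)
  hence "l + size Z = r + 2 * length mus" by (simp add: Wm_size)
  thus ?thesis using len by simp
qed

lemma S_minus1:
  assumes "specok l r mus Z"
  shows "-1 \<in># Z - {#1#}"
proof -
  have "1 \<in> set mus" using assms unfolding specok_def by auto
  thus ?thesis using S_mem[OF assms, of "-1"] by force
qed

lemma S_11:
  assumes "specok 1 1 mus Z"
  shows "Z - {#1#} = {#-1#}"
proof -
  have "length mus = 1" "1 \<in> set mus" using assms unfolding specok_def by auto
  hence mus: "mus = [1]" by (cases mus) auto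
  have eq: "replicate_mset 1 0 + Z = replicate_mset 1 0 + Wm mus" using assms unfolding specok_def by simp
  hence "Z = Wm mus" by simp
  thus ?thesis unfolding mus by (simp add: Wm_def)
qed

lemma size_two_vals:
  assumes "set_mset M \<subseteq> {a, b}" "a \<noteq> b"
  shows "size M = count M a + count M b"
  using assms
proof (induction M)
  case empty thus ?case by simp
next
  case (add x M)
  hence "set_mset M \<subseteq> {a,b}" "x = a \<or> x = b" by auto
  thus ?case using add by auto
qed

lemma S_nonneg:
  assumes sp: "specok l r mus Z"
  shows "(\<exists>s. s \<in># Z - {#1#} \<and> s \<ge> 0) \<longleftrightarrow> \<not> (l = 1 \<and> r = 1)"
proof
  assume "\<exists>s. s \<in># Z - {#1#} \<and> s \<ge> 0"
  then obtain s where s: "s \<in># Z - {#1#}" "s \<ge> 0" by blast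
  show "\<not> (l = 1 \<and> r = 1)"
  proof
    assume "l = 1 \<and> r = 1"
    hence "Z - {#1#} = {#-1#}" using S_11 sp by auto
    thus False using s by simp
  qed
next
  assume nl: "\<not> (l = 1 \<and> r = 1)"
  show "\<exists>s. s \<in># Z - {#1#} \<and> s \<ge> 0"
  proof (rule ccontr)
    assume no: "\<not> (\<exists>s. s \<in># Z - {#1#} \<and> s \<ge> 0)"
    have nn: "\<forall>\<mu>\<in>set mus. 0 \<le> \<mu> \<and> \<mu> \<le> 1" and len: "length mus = l" and lr: "l \<ge> 1" "r \<ge> 1"
      and one: "1 \<in> set mus"
      using sp unfolding specok_def by auto
    have "\<not> 1 \<in># Z - {#1#}" using no by auto
    hence c1: "count (mset mus) 1 \<le> 1" using S_one[OF sp] by simp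
    have c1': "count (mset mus) 1 \<ge> 1" using one by (simp add: Suc_le_eq)
    have vals: "set_mset (mset mus) \<subseteq> {0, 1}"
    proof
      fix \<mu> assume "\<mu> \<in># mset mus"
      hence mu: "\<mu> \<in> set mus" by simp
      show "\<mu> \<in> {0, 1}"
      proof (rule ccontr)
        assume "\<mu> \<notin> {0,1}"
        hence "0 < \<mu>" "\<mu> < 1" using nn mu by auto
        hence "sqrt \<mu> \<noteq> 0" "sqrt \<mu> \<noteq> 1" by auto
        hence "sqrt \<mu> \<in># Z - {#1#}" using S_mem[OF sp] mu by blast
        moreover have "sqrt \<mu> \<ge> 0" using nn mu by simp
        ultimately show False using no by blast
      qed
    qed
    have "size (mset mus) = count (mset mus) 0 + count (mset mus) 1"
      by (rule size_two_vals[OF vals]) simp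
    hence "length mus = count (mset mus) 0 + count (mset mus) 1" by (simp only: size_mset)
    hence c0: "count (mset mus) 0 = l - 1" using c1 c1' len by linarith
    have "\<not> 0 \<in># Z - {#1#}" using no by auto
    hence "count Z 0 = 0" by (simp add: in_diff_count not_in_iff)
    moreover have "count Z 0 + l = r + count (Wm mus) 0" using specok_count[OF sp, of 0] by simp
    moreover have "count (Wm mus) 0 = 2 * count (mset mus) 0" using Wm_count0 nn by auto
    ultimately have "l = r + 2 * (l - 1)" using c0 by simp
    thus False using nl lr by simp
  qed
qed

lemma sorted_last_ge: "sorted xs \<Longrightarrow> xs \<noteq> [] \<Longrightarrow> x \<in> set xs \<Longrightarrow> x \<le> last xs"
proof -
  assume s: "sorted xs" and ne: "xs \<noteq> []" and x: "x \<in> set xs"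
  have "xs = butlast xs @ [last xs]" using ne by simp
  hence "sorted (butlast xs @ [last xs])" using s by simp
  hence all: "\<forall>y\<in>set (butlast xs). y \<le> last xs" by (simp add: sorted_append)
  show ?thesis
  proof (cases "x = last xs")
    case True thus ?thesis by simp
  next
    case False
    hence "x \<in> set (butlast xs)" using x ne by (metis in_set_butlast_appendI append_butlast_last_id
      butlast_snoc rotate1.simps(2) set_ConsD set_rotate1)
    thus ?thesis using all by simp
  qed
qed

definition sec :: "real multiset \<Rightarrow> real" where
  "sec Z = rev (sorted_list_of_multiset Z) ! 1"

lemma sec_Max:
  assumes sz: "size Z \<ge> 2" and one: "1 \<in># Z" and le: "\<forall>z\<in>#Z. z \<le> 1"
  shows "sec Z = Max (set_mset (Z - {#1#}))"
proof -
  define xs where "xs = sorted_list_of_multiset Z"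
  have mxs: "mset xs = Z" and sxs: "sorted xs" unfolding xs_def by simp_all
  have len: "length xs = size Z" using mxs by (metis size_mset)
  have ne: "xs \<noteq> []" using len sz by auto
  have lastin: "last xs \<in># Z" using ne mxs by (metis last_in_set set_mset_mset)
  have "1 \<le> last xs" using sorted_last_ge[OF sxs ne] one mxs by (metis set_mset_mset)
  moreover have "last xs \<le> 1" using le lastin by simp
  ultimately have last1: "last xs = 1" by simp
  define ys where "ys = butlast xs"
  have xsys: "xs = ys @ [1]" using ne last1 unfolding ys_def by (metis append_butlast_last_id)
  have mys: "mset ys = Z - {#1#}" using mxs xsys by auto
  have sys: "sorted ys" using sxs xsys by (simp add: sorted_append)
  have lys: "length ys = size Z - 1" using len xsys by simp
  have yne: "ys \<noteq> []" using lys sz by auto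
  have "sec Z = rev xs ! 1" unfolding sec_def xs_def ..
  also have "rev xs = 1 # rev ys" using xsys by simp
  also have "(1 # rev ys) ! 1 = rev ys ! 0" by simp
  also have "rev ys ! 0 = last ys" using yne by (simp add: hd_rev[symmetric] hd_conv_nth[symmetric] rev_is_Nil_conv)
  also have "last ys = Max (set ys)"
    by (rule Max_eqI[symmetric]) (use sorted_last_ge[OF sys yne] yne in auto)
  also have "set ys = set_mset (Z - {#1#})" using mys by (metis set_mset_mset)
  finally show ?thesis .
qed

lemma sec_spec:
  assumes "specok l r mus Z"
  shows "sec Z = Max (set_mset (Z - {#1#}))"
proof (rule sec_Max)
  show "size Z \<ge> 2" using Z_size[OF assms] assms unfolding specok_def by simp
  show "1 \<in># Z" by (rule one_in_Z[OF assms])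
  show "\<forall>z\<in>#Z. z \<le> 1" using Z_le1[OF assms] by blast
qed

lemma plist_Nil[simp]: "plist [] ys = []"
  by (simp add: plist_def)

lemma plist_Cons: "plist (x # xs) ys = map (\<lambda>b. x * b) ys @ plist xs ys"
  by (simp add: plist_def)

lemma plist_set: "t \<in> set (plist xs ys) \<longleftrightarrow> (\<exists>a\<in>set xs. \<exists>b\<in>set ys. t = a * b)"
  by (auto simp: plist_def)

lemma plist_length: "length (plist xs ys) = length xs * length ys"
  by (induction xs) (auto simp: plist_Cons)

lemma count_map_one:
  assumes "x \<ge> 0" "x \<le> 1" "\<forall>y\<in>set ys. 0 \<le> y \<and> y \<le> (1::real)"
  shows "count (mset (map (\<lambda>b. x * b) ys)) 1 = (if x = 1 then count (mset ys) 1 else 0)"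
  using assms(3)
proof (induction ys)
  case Nil thus ?case by simp
next
  case (Cons y ys)
  have y: "0 \<le> y" "y \<le> 1" using Cons.prems by auto
  have "x * y = 1 \<longleftrightarrow> x = 1 \<and> y = 1"
  proof
    assume h: "x * y = 1"
    have "x * y \<le> x * 1" using y assms(1) by (intro mult_left_mono) auto
    hence "1 \<le> x" using h by simp
    hence x1: "x = 1" using assms(2) by simp
    thus "x = 1 \<and> y = 1" using h by simp
  qed simp
  thus ?case using Cons by auto
qed

lemma plist_count1:
  assumes "\<forall>x\<in>set xs. 0 \<le> x \<and> x \<le> (1::real)" "\<forall>y\<in>set ys. 0 \<le> y \<and> y \<le> (1::real)"
  shows "count (mset (plist xs ys)) 1 = count (mset xs) 1 * count (mset ys) 1"
  using assms(1)
proof (induction xs)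
  case Nil thus ?case by (simp add: plist_def)
next
  case (Cons x xs)
  have x: "0 \<le> x" "x \<le> 1" using Cons.prems by auto
  have "count (mset (plist (x#xs) ys)) 1 = count (mset (map (\<lambda>b. x * b) ys)) 1 + count (mset (plist xs ys)) 1"
    by (simp add: plist_Cons)
  also have "\<dots> = (if x = 1 then count (mset ys) 1 else 0) + count (mset xs) 1 * count (mset ys) 1"
    using count_map_one[OF x assms(2)] Cons by simp
  also have "\<dots> = count (mset (x#xs)) 1 * count (mset ys) 1" by simp
  finally show ?case .
qed

lemma specok_prod:
  assumes s1: "specok l1 r1 mus1 Z1" and s2: "specok l2 r2 mus2 Z2"
    and eq: "replicate_mset (l1*l2) 0 + ZP = replicate_mset (r1*r2) 0 + Wm (plist mus1 mus2)"
  shows "specok (l1*l2) (r1*r2) (plist mus1 mus2) ZP"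
proof -
  have a1: "length mus1 = l1" "l1 \<ge> 1" "r1 \<ge> 1" "\<forall>\<mu>\<in>set mus1. 0 \<le> \<mu> \<and> \<mu> \<le> 1" "1 \<in> set mus1"
    using s1 unfolding specok_def by auto
  have a2: "length mus2 = l2" "l2 \<ge> 1" "r2 \<ge> 1" "\<forall>\<mu>\<in>set mus2. 0 \<le> \<mu> \<and> \<mu> \<le> 1" "1 \<in> set mus2"
    using s2 unfolding specok_def by auto
  have rng: "\<forall>\<mu>\<in>set (plist mus1 mus2). 0 \<le> \<mu> \<and> \<mu> \<le> 1"
  proof
    fix t assume "t \<in> set (plist mus1 mus2)"
    then obtain a b where ab: "a \<in> set mus1" "b \<in> set mus2" "t = a * b" using plist_set by blast
    have "0 \<le> a" "a \<le> 1" "0 \<le> b" "b \<le> 1" using ab a1 a2 by auto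
    moreover have "a * b \<le> 1 * 1" using \<open>0 \<le> a\<close> \<open>a \<le> 1\<close> \<open>0 \<le> b\<close> \<open>b \<le> 1\<close> by (intro mult_mono) auto
    ultimately show "0 \<le> t \<and> t \<le> 1" using ab by simp
  qed
  have "1 * 1 \<in> set (plist mus1 mus2)" using plist_set a1(5) a2(5) by blast
  hence one: "1 \<in> set (plist mus1 mus2)" by simp
  have "l1 * l2 \<ge> 1" "r1 * r2 \<ge> 1" using a1 a2 by simp_all
  thus ?thesis unfolding specok_def using rng one eq plist_length a1(1) a2(1) by simp
qed

lemma lift1:
  assumes s1: "specok l1 r1 mus1 Z1" and s2: "specok l2 r2 mus2 Z2"
    and sP: "specok (l1*l2) (r1*r2) (plist mus1 mus2) ZP"
    and s: "s \<in># Z1 - {#1#}" "s > 0"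
  shows "s \<in># ZP - {#1#}"
proof (cases "s = 1")
  case True
  have r1: "\<forall>\<mu>\<in>set mus1. 0 \<le> \<mu> \<and> \<mu> \<le> 1" and r2: "\<forall>\<mu>\<in>set mus2. 0 \<le> \<mu> \<and> \<mu> \<le> 1"
    and o2: "1 \<in> set mus2" using s1 s2 unfolding specok_def by auto
  have "count (mset mus1) 1 \<ge> 2" using S_one[OF s1] s True by simp
  moreover have "count (mset mus2) 1 \<ge> 1" using o2 by (simp add: Suc_le_eq)
  ultimately have "count (mset mus1) 1 * count (mset mus2) 1 \<ge> 2 * 1" by (intro mult_le_mono) auto
  hence "count (mset (plist mus1 mus2)) 1 \<ge> 2" using plist_count1[OF r1 r2] by simp
  thus ?thesis using S_one[OF sP] True by simp
next
  case False
  have ne0: "s \<noteq> 0" using s by simp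
  obtain \<mu> where mu: "\<mu> \<in> set mus1" "s = sqrt \<mu> \<or> s = - sqrt \<mu>" using S_mem[OF s1 ne0 False] s by blast
  have "\<mu> \<ge> 0" using mu(1) s1 unfolding specok_def by auto
  hence "sqrt \<mu> \<ge> 0" by simp
  hence "s = sqrt \<mu>" using mu(2) s(2) by linarith
  have o2: "1 \<in> set mus2" using s2 unfolding specok_def by auto
  have "\<mu> * 1 \<in> set (plist mus1 mus2)" using plist_set mu(1) o2 by blast
  hence "\<exists>t\<in>set (plist mus1 mus2). s = sqrt t \<or> s = - sqrt t" using \<open>s = sqrt \<mu>\<close> by auto
  thus ?thesis using S_mem[OF sP ne0 False] by blast
qed

lemma lift2:
  assumes s1: "specok l1 r1 mus1 Z1" and s2: "specok l2 r2 mus2 Z2"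
    and sP: "specok (l1*l2) (r1*r2) (plist mus1 mus2) ZP"
    and s: "s \<in># Z2 - {#1#}" "s > 0"
  shows "s \<in># ZP - {#1#}"
proof (cases "s = 1")
  case True
  have r1: "\<forall>\<mu>\<in>set mus1. 0 \<le> \<mu> \<and> \<mu> \<le> 1" and r2: "\<forall>\<mu>\<in>set mus2. 0 \<le> \<mu> \<and> \<mu> \<le> 1"
    and o1: "1 \<in> set mus1" using s1 s2 unfolding specok_def by auto
  have "count (mset mus2) 1 \<ge> 2" using S_one[OF s2] s True by simp
  moreover have "count (mset mus1) 1 \<ge> 1" using o1 by (simp add: Suc_le_eq)
  ultimately have "count (mset mus1) 1 * count (mset mus2) 1 \<ge> 1 * 2" by (intro mult_le_mono) auto
  hence "count (mset (plist mus1 mus2)) 1 \<ge> 2" using plist_count1[OF r1 r2] by simp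
  thus ?thesis using S_one[OF sP] True by simp
next
  case False
  have ne0: "s \<noteq> 0" using s by simp
  obtain \<mu> where mu: "\<mu> \<in> set mus2" "s = sqrt \<mu> \<or> s = - sqrt \<mu>" using S_mem[OF s2 ne0 False] s by blast
  have "\<mu> \<ge> 0" using mu(1) s2 unfolding specok_def by auto
  hence "sqrt \<mu> \<ge> 0" by simp
  hence "s = sqrt \<mu>" using mu(2) s(2) by linarith
  have o1: "1 \<in> set mus1" using s1 unfolding specok_def by auto
  have "1 * \<mu> \<in> set (plist mus1 mus2)" using plist_set mu(1) o1 by blast
  hence "\<exists>t\<in>set (plist mus1 mus2). s = sqrt t \<or> s = - sqrt t" using \<open>s = sqrt \<mu>\<close> by auto
  thus ?thesis using S_mem[OF sP ne0 False] by blast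
qed

lemma down:
  assumes s1: "specok l1 r1 mus1 Z1" and s2: "specok l2 r2 mus2 Z2"
    and sP: "specok (l1*l2) (r1*r2) (plist mus1 mus2) ZP"
    and z: "z \<in># ZP - {#1#}" "z > 0"
  shows "\<exists>s. (s \<in># Z1 - {#1#} \<or> s \<in># Z2 - {#1#}) \<and> z \<le> s"
proof (cases "z = 1")
  case True
  have r1: "\<forall>\<mu>\<in>set mus1. 0 \<le> \<mu> \<and> \<mu> \<le> 1" and r2: "\<forall>\<mu>\<in>set mus2. 0 \<le> \<mu> \<and> \<mu> \<le> 1"
    using s1 s2 unfolding specok_def by auto
  have "count (mset (plist mus1 mus2)) 1 \<ge> 2" using S_one[OF sP] z True by simp
  hence "count (mset mus1) 1 * count (mset mus2) 1 \<ge> 2" using plist_count1[OF r1 r2] by simp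
  hence "count (mset mus1) 1 \<ge> 2 \<or> count (mset mus2) 1 \<ge> 2"
  proof -
    assume h: "count (mset mus1) 1 * count (mset mus2) 1 \<ge> 2"
    show ?thesis
    proof (rule ccontr)
      assume "\<not> (count (mset mus1) 1 \<ge> 2 \<or> count (mset mus2) 1 \<ge> 2)"
      hence "count (mset mus1) 1 \<le> 1" "count (mset mus2) 1 \<le> 1" by auto
      hence "count (mset mus1) 1 * count (mset mus2) 1 \<le> 1 * 1" by (rule mult_le_mono)
      thus False using h by simp
    qed
  qed
  hence "1 \<in># Z1 - {#1#} \<or> 1 \<in># Z2 - {#1#}" using S_one[OF s1] S_one[OF s2] by blast
  thus ?thesis using True by blast
next
  case False
  have ne0: "z \<noteq> 0" using z by simp
  obtain t where t: "t \<in> set (plist mus1 mus2)" "z = sqrt t \<or> z = - sqrt t"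
    using S_mem[OF sP ne0 False] z by blast
  obtain a b where ab: "a \<in> set mus1" "b \<in> set mus2" "t = a * b" using t(1) plist_set by blast
  have a: "0 \<le> a" "a \<le> 1" and b: "0 \<le> b" "b \<le> 1" using ab s1 s2 unfolding specok_def by auto
  have "t \<ge> 0" using ab a b by simp
  hence "sqrt t \<ge> 0" by simp
  hence zt: "z = sqrt t" using t(2) z(2) by linarith
  have zab: "z = sqrt a * sqrt b" using zt ab by (simp add: real_sqrt_mult)
  have "a \<noteq> 0"
  proof
    assume "a = 0" thus False using zab z(2) by simp
  qed
  hence apos: "a > 0" using a by simp
  have "b \<noteq> 0"
  proof
    assume "b = 0" thus False using zab z(2) by simp
  qed
  hence bpos: "b > 0" using b by simp
  show ?thesis
  proof (cases "a = 1")
    case False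
    have sa: "sqrt a \<noteq> 0" "sqrt a \<noteq> 1" using apos False a by auto
    have "sqrt a \<in># Z1 - {#1#}" using S_mem[OF s1 sa] ab(1) by blast
    moreover have "z \<le> sqrt a"
    proof -
      have "sqrt b \<le> 1" using b by simp
      hence "sqrt a * sqrt b \<le> sqrt a * 1" using a by (intro mult_left_mono) auto
      thus ?thesis using zab by simp
    qed
    ultimately show ?thesis by blast
  next
    case True
    hence "b \<noteq> 1" using \<open>z \<noteq> 1\<close> zab by auto
    have sb: "sqrt b \<noteq> 0" "sqrt b \<noteq> 1" using bpos \<open>b \<noteq> 1\<close> b by auto
    have "sqrt b \<in># Z2 - {#1#}" using S_mem[OF s2 sb] ab(2) by blast
    moreover have "z \<le> sqrt b" using zab True by simp
    ultimately show ?thesis by blast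
  qed
qed

lemma sec_prod:
  assumes s1: "specok l1 r1 mus1 Z1" and s2: "specok l2 r2 mus2 Z2"
    and sP: "specok (l1*l2) (r1*r2) (plist mus1 mus2) ZP"
  shows "sec ZP = max (sec Z1) (sec Z2)"
proof -
  define S1 where "S1 = set_mset (Z1 - {#1#})"
  define S2 where "S2 = set_mset (Z2 - {#1#})"
  define SP where "SP = set_mset (ZP - {#1#})"
  have fin: "finite S1" "finite S2" "finite SP" unfolding S1_def S2_def SP_def by auto
  have ne: "S1 \<noteq> {}" "S2 \<noteq> {}" "SP \<noteq> {}"
    using S_minus1[OF s1] S_minus1[OF s2] S_minus1[OF sP] unfolding S1_def S2_def SP_def by auto
  have sec: "sec Z1 = Max S1" "sec Z2 = Max S2" "sec ZP = Max SP"
    unfolding S1_def S2_def SP_def by (simp_all add: sec_spec[OF s1] sec_spec[OF s2] sec_spec[OF sP])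
  show ?thesis
  proof (cases "l1 = 1 \<and> r1 = 1 \<and> l2 = 1 \<and> r2 = 1")
    case True
    hence "specok 1 1 mus1 Z1" "specok 1 1 mus2 Z2" "specok 1 1 (plist mus1 mus2) ZP"
      using s1 s2 sP by auto
    hence "S1 = {-1}" "S2 = {-1}" "SP = {-1}" unfolding S1_def S2_def SP_def
      using S_11 by auto
    thus ?thesis using sec by simp
  next
    case False
    have "\<not> (l1 * l2 = 1 \<and> r1 * r2 = 1)" using False by auto
    then obtain p where p: "p \<in> SP" "p \<ge> 0" using S_nonneg[OF sP] unfolding SP_def by auto
    have "\<not> (l1 = 1 \<and> r1 = 1) \<or> \<not> (l2 = 1 \<and> r2 = 1)" using False by auto
    then obtain q where q: "q \<in> S1 \<union> S2" "q \<ge> 0"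
      using S_nonneg[OF s1] S_nonneg[OF s2] unfolding S1_def S2_def by blast
    have MP0: "Max SP \<ge> 0" using Max_ge[OF fin(3) p(1)] p(2) by simp
    have M120: "max (Max S1) (Max S2) \<ge> 0"
      using q Max_ge[OF fin(1)] Max_ge[OF fin(2)] by fastforce
    have le1: "Max SP \<le> max (Max S1) (Max S2)"
    proof (cases "Max SP = 0")
      case True thus ?thesis using M120 by simp
    next
      case False
      hence zpos: "Max SP > 0" using MP0 by simp
      have "Max SP \<in># ZP - {#1#}" using Max_in[OF fin(3) ne(3)] unfolding SP_def by simp
      then obtain s where s: "s \<in># Z1 - {#1#} \<or> s \<in># Z2 - {#1#}" "Max SP \<le> s"
        using down[OF s1 s2 sP _ zpos] by blast
      have "s \<le> max (Max S1) (Max S2)"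
      proof (cases "s \<in># Z1 - {#1#}")
        case True
        hence "s \<le> Max S1" using Max_ge[OF fin(1)] unfolding S1_def by simp
        thus ?thesis by simp
      next
        case False
        hence "s \<in># Z2 - {#1#}" using s(1) by blast
        hence "s \<le> Max S2" using Max_ge[OF fin(2)] unfolding S2_def by simp
        thus ?thesis by simp
      qed
      thus ?thesis using s(2) by simp
    qed
    have le2: "Max S1 \<le> Max SP"
    proof (cases "Max S1 > 0")
      case True
      have "Max S1 \<in># Z1 - {#1#}" using Max_in[OF fin(1) ne(1)] unfolding S1_def by simp
      hence "Max S1 \<in> SP" using lift1[OF s1 s2 sP _ True] unfolding SP_def by simp
      thus ?thesis using Max_ge[OF fin(3)] by simp
    next
      case False thus ?thesis using MP0 by simp
    qed
    have le3: "Max S2 \<le> Max SP"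
    proof (cases "Max S2 > 0")
      case True
      have "Max S2 \<in># Z2 - {#1#}" using Max_in[OF fin(2) ne(2)] unfolding S2_def by simp
      hence "Max S2 \<in> SP" using lift2[OF s1 s2 sP _ True] unfolding SP_def by simp
      thus ?thesis using Max_ge[OF fin(3)] by simp
    next
      case False thus ?thesis using MP0 by simp
    qed
    show ?thesis using le1 le2 le3 sec by simp
  qed
qed

lemma deg_pos:
  assumes wf: "wf_bigraph G" and L: "lpart G \<noteq> {}" and R: "rpart G \<noteq> {}"
    and c: "connected_bigraph G" and v: "v \<in> verts G"
  shows "degree G v > 0"
proof -
  obtain w where w: "w \<in> verts G" "w \<noteq> v"
  proof (cases v)
    case (Inl a)
    obtain b where "b \<in> rpart G" using R by auto
    hence "Inr b \<in> verts G" by (auto simp: verts_def)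
    thus ?thesis using that Inl by auto
  next
    case (Inr b)
    obtain a where "a \<in> lpart G" using L by auto
    hence "Inl a \<in> verts G" by (auto simp: verts_def)
    thus ?thesis using that Inr by auto
  qed
  have "(\<lambda>x y. x \<in> verts G \<and> y \<in> verts G \<and> adj G x y)\<^sup>*\<^sup>* v w"
    using c v w(1) unfolding connected_bigraph_def by blast
  then obtain u where u: "u \<in> verts G" "adj G v u"
  proof (cases rule: converse_rtranclpE)
    case base thus ?thesis using w(2) by simp
  next
    case (step y) thus ?thesis using that by blast
  qed
  have fin: "finite (verts G)" using wf unfolding wf_bigraph_def verts_def by simp
  have "{u \<in> verts G. adj G v u} \<noteq> {}" using u by auto
  moreover have "finite {u \<in> verts G. adj G v u}" using fin by simp
  ultimately show ?thesis unfolding degree_def by (simp add: card_gt_0_iff)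
qed

lemma graph_setup:
  assumes wf: "wf_bigraph G" and L: "lpart G \<noteq> {}" and R: "rpart G \<noteq> {}"
    and c: "connected_bigraph G" and b: "biregular G"
  obtains dL dR where "\<And>a. a \<in> lpart G \<Longrightarrow> degree G (Inl a) = dL"
    "\<And>b. b \<in> rpart G \<Longrightarrow> degree G (Inr b) = dR" "dL > 0" "dR > 0"
proof -
  obtain dL where dL: "\<forall>a \<in> lpart G. degree G (Inl a) = dL" using b unfolding biregular_def by blast
  obtain dR where dR: "\<forall>b \<in> rpart G. degree G (Inr b) = dR" using b unfolding biregular_def by blast
  obtain a where a: "a \<in> lpart G" using L by auto
  obtain b where bb: "b \<in> rpart G" using R by auto
  have "degree G (Inl a) > 0" by (rule deg_pos[OF wf L R c]) (use a in \<open>auto simp: verts_def\<close>)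
  hence "dL > 0" using dL a by simp
  moreover have "degree G (Inr b) > 0" by (rule deg_pos[OF wf L R c]) (use bb in \<open>auto simp: verts_def\<close>)
  hence "dR > 0" using dR bb by simp
  ultimately show ?thesis using that dL dR by blast
qed

lemma graph_spec:
  assumes bL: "bij_betw fL {0..<l} (lpart G)" and bR: "bij_betw fR {0..<r} (rpart G)"
    and dL: "\<And>a. a \<in> lpart G \<Longrightarrow> degree G (Inl a) = dL"
    and dR: "\<And>b. b \<in> rpart G \<Longrightarrow> degree G (Inr b) = dR"
    and dLp: "dL > 0" and dRp: "dR > 0" and lpos: "l > 0" and rpos: "r > 0"
  obtains mus where "char_poly (Pm G fL fR l r * Qm G fL fR l r) = (\<Prod>\<mu>\<leftarrow>mus. [:-\<mu>,1:])"
    "specok l r mus (proots (charpoly_on (verts G) (transition G)))"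
proof -
  obtain mus where m: "char_poly (Pm G fL fR l r * Qm G fL fR l r) = (\<Prod>\<mu>\<leftarrow>mus. [:-\<mu>,1:])"
    "length mus = l" "\<forall>\<mu>\<in>set mus. 0 \<le> \<mu> \<and> \<mu> \<le> 1" "1 \<in> set mus"
    using PQ_mus[OF bL bR dL dR dLp dRp lpos] by blast
  have Pc: "Pm G fL fR l r \<in> carrier_mat l r" and Qc: "Qm G fL fR l r \<in> carrier_mat r l"
    by (simp_all add: Pm_def Qm_def)
  have nn: "\<forall>\<mu>\<in>set mus. \<mu> \<ge> 0" using m(3) by auto
  have "replicate_mset l 0 + proots (charpoly_on (verts G) (transition G)) = replicate_mset r 0 + Wm mus"
    unfolding charpoly_T[OF bL bR] by (rule spec_struct[OF Pc Qc m(1) nn])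
  hence "specok l r mus (proots (charpoly_on (verts G) (transition G)))"
    unfolding specok_def using m lpos rpos by auto
  thus ?thesis using that m(1) by blast
qed

lemma lambda2_sec: "lambda2 G = sec (proots (charpoly_on (verts G) (transition G)))"
  unfolding lambda2_def eigenvalues_desc_def sec_def ..

theorem mainTheorem3:
  fixes G1 :: "('a, 'b) bigraph" and G2 :: "('c, 'd) bigraph"
  assumes "wf_bigraph G1" "wf_bigraph G2"
    and "lpart G1 \<noteq> {}" "rpart G1 \<noteq> {}" "lpart G2 \<noteq> {}" "rpart G2 \<noteq> {}"
    and "connected_bigraph G1" "connected_bigraph G2"
    and "biregular G1" "biregular G2"
  shows "lambda2 (partite_product G1 G2) = max (lambda2 G1) (lambda2 G2)"
proof -
  note wf1 = assms(1) and wf2 = assms(2)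
  have fin: "finite (lpart G1)" "finite (rpart G1)" "finite (lpart G2)" "finite (rpart G2)"
    using wf1 wf2 unfolding wf_bigraph_def by auto
  obtain dL1 dR1 where d1: "\<And>a. a \<in> lpart G1 \<Longrightarrow> degree G1 (Inl a) = dL1"
    "\<And>b. b \<in> rpart G1 \<Longrightarrow> degree G1 (Inr b) = dR1" "dL1 > 0" "dR1 > 0"
    using graph_setup[OF wf1 assms(3,4,7,9)] by blast
  obtain dL2 dR2 where d2: "\<And>a. a \<in> lpart G2 \<Longrightarrow> degree G2 (Inl a) = dL2"
    "\<And>b. b \<in> rpart G2 \<Longrightarrow> degree G2 (Inr b) = dR2" "dL2 > 0" "dR2 > 0"
    using graph_setup[OF wf2 assms(5,6,8,10)] by blast
  define l1 where "l1 = card (lpart G1)"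
  define r1 where "r1 = card (rpart G1)"
  define l2 where "l2 = card (lpart G2)"
  define r2 where "r2 = card (rpart G2)"
  have pos: "l1 > 0" "r1 > 0" "l2 > 0" "r2 > 0"
    unfolding l1_def r1_def l2_def r2_def using fin assms(3-6) by (simp_all add: card_gt_0_iff)
  obtain fL1 where bL1: "bij_betw fL1 {0..<l1} (lpart G1)" unfolding l1_def using ex_bij_betw_nat_finite[OF fin(1)] by blast
  obtain fR1 where bR1: "bij_betw fR1 {0..<r1} (rpart G1)" unfolding r1_def using ex_bij_betw_nat_finite[OF fin(2)] by blast
  obtain fL2 where bL2: "bij_betw fL2 {0..<l2} (lpart G2)" unfolding l2_def using ex_bij_betw_nat_finite[OF fin(3)] by blast
  obtain fR2 where bR2: "bij_betw fR2 {0..<r2} (rpart G2)" unfolding r2_def using ex_bij_betw_nat_finite[OF fin(4)] by blast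
  obtain mus1 where m1: "char_poly (Pm G1 fL1 fR1 l1 r1 * Qm G1 fL1 fR1 l1 r1) = (\<Prod>\<mu>\<leftarrow>mus1. [:-\<mu>,1:])"
    "specok l1 r1 mus1 (proots (charpoly_on (verts G1) (transition G1)))"
    using graph_spec[OF bL1 bR1 d1 pos(1,2)] by blast
  obtain mus2 where m2: "char_poly (Pm G2 fL2 fR2 l2 r2 * Qm G2 fL2 fR2 l2 r2) = (\<Prod>\<mu>\<leftarrow>mus2. [:-\<mu>,1:])"
    "specok l2 r2 mus2 (proots (charpoly_on (verts G2) (transition G2)))"
    using graph_spec[OF bL2 bR2 d2 pos(3,4)] by blast
  have len1: "length mus1 = l1" and len2: "length mus2 = l2"
    and rng1: "\<forall>\<mu>\<in>set mus1. 0 \<le> \<mu> \<and> \<mu> \<le> 1" and rng2: "\<forall>\<mu>\<in>set mus2. 0 \<le> \<mu> \<and> \<mu> \<le> 1"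
    using m1(2) m2(2) unfolding specok_def by auto
  let ?G = "partite_product G1 G2"
  let ?fL = "penum fL1 fL2 l2" and ?fR = "penum fR1 fR2 r2"
  have bL: "bij_betw ?fL {0..<l1*l2} (lpart ?G)"
    using penum_bij[OF bL1 bL2] by (simp add: partite_product_def)
  have bR: "bij_betw ?fR {0..<r1*r2} (rpart ?G)"
    using penum_bij[OF bR1 bR2] by (simp add: partite_product_def)
  have M1: "Pm G1 fL1 fR1 l1 r1 * Qm G1 fL1 fR1 l1 r1 \<in> carrier_mat l1 l1" by (rule mult_carrier_mat[of _ l1 r1]) (simp_all add: Pm_def Qm_def)
  have M2: "Pm G2 fL2 fR2 l2 r2 * Qm G2 fL2 fR2 l2 r2 \<in> carrier_mat l2 l2" by (rule mult_carrier_mat[of _ l2 r2]) (simp_all add: Pm_def Qm_def)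
  have "char_poly (Pm ?G ?fL ?fR (l1*l2) (r1*r2) * Qm ?G ?fL ?fR (l1*l2) (r1*r2))
      = char_poly (kron (Pm G1 fL1 fR1 l1 r1 * Qm G1 fL1 fR1 l1 r1) (Pm G2 fL2 fR2 l2 r2 * Qm G2 fL2 fR2 l2 r2))"
    by (simp only: PQ_prod)
  also have "\<dots> = (\<Prod>i<l1. \<Prod>j<l2. [:-(mus1!i * mus2!j), 1:])"
    by (rule kron_char_poly[OF M1 M2 m1(1) m2(1)])
  also have "\<dots> = (\<Prod>x\<leftarrow>plist mus1 mus2. [:-x,1:])"
    using plist_prod[where f="\<lambda>x. [:-x,1:]" and xs=mus1 and ys=mus2] len1 len2 by simp
  finally have cP: "char_poly (Pm ?G ?fL ?fR (l1*l2) (r1*r2) * Qm ?G ?fL ?fR (l1*l2) (r1*r2))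
      = (\<Prod>x\<leftarrow>plist mus1 mus2. [:-x,1:])" .
  have nnP: "\<forall>\<mu>\<in>set (plist mus1 mus2). \<mu> \<ge> 0"
  proof
    fix t assume "t \<in> set (plist mus1 mus2)"
    then obtain a b where ab: "a \<in> set mus1" "b \<in> set mus2" "t = a * b" using plist_set by blast
    thus "t \<ge> 0" using rng1 rng2 by simp
  qed
  have PcP: "Pm ?G ?fL ?fR (l1*l2) (r1*r2) \<in> carrier_mat (l1*l2) (r1*r2)"
    and QcP: "Qm ?G ?fL ?fR (l1*l2) (r1*r2) \<in> carrier_mat (r1*r2) (l1*l2)"
    by (simp_all add: Pm_def Qm_def)
  have "replicate_mset (l1*l2) 0 + proots (charpoly_on (verts ?G) (transition ?G))
      = replicate_mset (r1*r2) 0 + Wm (plist mus1 mus2)"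
    unfolding charpoly_T[OF bL bR] by (rule spec_struct[OF PcP QcP cP nnP])
  hence sP: "specok (l1*l2) (r1*r2) (plist mus1 mus2) (proots (charpoly_on (verts ?G) (transition ?G)))"
    by (rule specok_prod[OF m1(2) m2(2)])
  show ?thesis unfolding lambda2_sec by (rule sec_prod[OF m1(2) m2(2) sP])
qed

end
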